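(* Let $m\geq1$. The filtered $\mathbb{C}$-algebra of character polynomials of $\mathbf{FI}^m$ coincides with the polynomial ring $R=\mathbb{C}[X_k^{(i)}: k\geq1,\ 1\leq i\leq m]$, where the degree of $X_k^{(i)}$ is $k\bar e^{(i)}=(0,\dots,k,\dots,0)$ ($k$ in the $i$-th coordinate).
   Context: $\mathbf{FI}$ is the category of finite sets and injections; $\mathbf{FI}^m$ has objects $m$-tuples of finite sets $\bar n=(n^{(1)},\dots,n^{(m)})$ and morphisms $m$-tuples of injections; $\bar n\leq\bar n'$ iff $|n^{(i)}|\leq|n'^{(i)}|$ for all $i$, and $\mathrm{Aut}(\bar n)=S_{\bar n}=S_{n^{(1)}}\times\cdots\times S_{n^{(m)}}$. On $S_{\bar n}$ (simultaneously for all $\bar n$), $X_k^{(i)}(\sigma^{(1)},\dots,\sigma^{(m)})$ is the number of $k$-cycles of $\sigma^{(i)}$. Character polynomials of $\mathbf{FI}^m$: for an object $\bar c$ and a conjugacy class $\mu\subseteq S_{\bar c}$ (write $|\mu|=\bar c$), let $\binom{\bar d}{\bar c}=\mathrm{Hom}(\bar c,\bar d)/S_{\bar c}$ and define the class function $\binom{X}{\mu}$ on every $S_{\bar d}$ by $\sigma\mapsto\#\{[f]\in\binom{\bar d}{\bar c}:\exists\psi\in\mu,\ \sigma f=f\psi\}$, of degree $\bar c$. A character polynomial is a $\mathbb{C}$-linear combination of such functions; it has degree $\leq\bar d$ if every $\binom{X}{\mu}$ appearing nontrivially has $|\mu|\leq\bar d$. *)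

theory Defs
  imports Complex_Main "HOL-Library.FuncSet" "HOL-Combinatorics.Permutations"
begin

text \<open>Objects of FI^m: tuples c :: nat => nat with c i = 0 for i >= m; the i-th
  finite set is {..<c i}.  Every finite set is isomorphic to such a standard one.\<close>
definition obj :: "nat \<Rightarrow> (nat \<Rightarrow> nat) set" where
  "obj m = {c. \<forall>i\<ge>m. c i = 0}"

definition Sym :: "(nat \<Rightarrow> nat) \<Rightarrow> (nat \<Rightarrow> nat \<Rightarrow> nat) set" where
  "Sym c = {\<sigma>. \<forall>i. \<sigma> i permutes {..<c i}}"

definition Dom :: "nat \<Rightarrow> ((nat \<Rightarrow> nat) \<times> (nat \<Rightarrow> nat \<Rightarrow> nat)) set" where
  "Dom m = {(n, \<sigma>). n \<in> obj m \<and> \<sigma> \<in> Sym n}"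

definition conj_class :: "(nat \<Rightarrow> nat) \<Rightarrow> (nat \<Rightarrow> nat \<Rightarrow> nat) \<Rightarrow> (nat \<Rightarrow> nat \<Rightarrow> nat) set" where
  "conj_class c \<rho> = {\<psi>. \<exists>\<tau>\<in>Sym c. \<psi> = (\<lambda>i. \<tau> i \<circ> \<rho> i \<circ> inv (\<tau> i))}"

definition conj_classes :: "(nat \<Rightarrow> nat) \<Rightarrow> (nat \<Rightarrow> nat \<Rightarrow> nat) set set" where
  "conj_classes c = {conj_class c \<rho> | \<rho>. \<rho> \<in> Sym c}"

definition Inj :: "(nat \<Rightarrow> nat) \<Rightarrow> (nat \<Rightarrow> nat) \<Rightarrow> (nat \<Rightarrow> nat \<Rightarrow> nat) set" where
  "Inj c d = {f. \<forall>i. f i \<in> {..<c i} \<rightarrow>\<^sub>E {..<d i} \<and> inj_on (f i) {..<c i}}"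

definition inj_class :: "(nat \<Rightarrow> nat) \<Rightarrow> (nat \<Rightarrow> nat \<Rightarrow> nat) \<Rightarrow> (nat \<Rightarrow> nat \<Rightarrow> nat) set" where
  "inj_class c f = {(\<lambda>i. f i \<circ> \<tau> i) | \<tau>. \<tau> \<in> Sym c}"

definition binomX :: "(nat \<Rightarrow> nat) \<Rightarrow> (nat \<Rightarrow> nat \<Rightarrow> nat) set
    \<Rightarrow> (nat \<Rightarrow> nat) \<times> (nat \<Rightarrow> nat \<Rightarrow> nat) \<Rightarrow> complex" where
  "binomX c \<mu> p = (case p of (d, \<sigma>) \<Rightarrow>
     of_nat (card {K. \<exists>f\<in>Inj c d. K = inj_class c f \<and>
        (\<exists>\<psi>\<in>\<mu>. \<forall>i. \<forall>x<c i. \<sigma> i (f i x) = f i (\<psi> i x))}))"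

definition cyc :: "(nat \<Rightarrow> nat) \<Rightarrow> nat \<Rightarrow> nat set" where
  "cyc g x = {(g ^^ j) x | j. True}"

definition num_cycles :: "nat \<Rightarrow> nat \<Rightarrow> (nat \<Rightarrow> nat) \<Rightarrow> nat" where
  "num_cycles k n g = card {C. \<exists>x<n. C = cyc g x \<and> card C = k}"

definition Xfun :: "nat \<Rightarrow> nat \<Rightarrow> (nat \<Rightarrow> nat) \<times> (nat \<Rightarrow> nat \<Rightarrow> nat) \<Rightarrow> complex" where
  "Xfun k i p = (case p of (n, \<sigma>) \<Rightarrow> of_nat (num_cycles k (n i) (\<sigma> i)))"

text \<open>Monomials of R = C[X_k^(i) : k >= 1, i < m]: exponent functions a k i, finitely supported.\<close>
definition monomials :: "nat \<Rightarrow> (nat \<Rightarrow> nat \<Rightarrow> nat) set" where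
  "monomials m = {a. finite {(k, i). a k i \<noteq> 0} \<and> (\<forall>k i. a k i \<noteq> 0 \<longrightarrow> 1 \<le> k \<and> i < m)}"

definition mono_fun :: "(nat \<Rightarrow> nat \<Rightarrow> nat) \<Rightarrow> (nat \<Rightarrow> nat) \<times> (nat \<Rightarrow> nat \<Rightarrow> nat) \<Rightarrow> complex" where
  "mono_fun a p = (\<Prod>ki\<in>{(k, i). a k i \<noteq> 0}. Xfun (fst ki) (snd ki) p ^ a (fst ki) (snd ki))"

definition mono_deg :: "(nat \<Rightarrow> nat \<Rightarrow> nat) \<Rightarrow> nat \<Rightarrow> nat" where
  "mono_deg a i = (\<Sum>k\<in>{k. a k i \<noteq> 0}. k * a k i)"

definition cspan_on :: "'a set \<Rightarrow> ('a \<Rightarrow> complex) set \<Rightarrow> ('a \<Rightarrow> complex) set" where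
  "cspan_on D A = {g. \<exists>F c. finite F \<and> F \<subseteq> A \<and> (\<forall>p\<in>D. g p = (\<Sum>f\<in>F. c f * f p))}"

definition CP_gens :: "nat \<Rightarrow> (nat \<Rightarrow> nat) \<Rightarrow> ((nat \<Rightarrow> nat) \<times> (nat \<Rightarrow> nat \<Rightarrow> nat) \<Rightarrow> complex) set" where
  "CP_gens m d = {binomX c \<mu> | c \<mu>. c \<in> obj m \<and> (\<forall>i. c i \<le> d i) \<and> \<mu> \<in> conj_classes c}"

definition CP_all_gens :: "nat \<Rightarrow> ((nat \<Rightarrow> nat) \<times> (nat \<Rightarrow> nat \<Rightarrow> nat) \<Rightarrow> complex) set" where
  "CP_all_gens m = {binomX c \<mu> | c \<mu>. c \<in> obj m \<and> \<mu> \<in> conj_classes c}"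

definition R_gens :: "nat \<Rightarrow> (nat \<Rightarrow> nat) \<Rightarrow> ((nat \<Rightarrow> nat) \<times> (nat \<Rightarrow> nat \<Rightarrow> nat) \<Rightarrow> complex) set" where
  "R_gens m d = {mono_fun a | a. a \<in> monomials m \<and> (\<forall>i<m. mono_deg a i \<le> d i)}"

definition R_all_gens :: "nat \<Rightarrow> ((nat \<Rightarrow> nat) \<times> (nat \<Rightarrow> nat \<Rightarrow> nat) \<Rightarrow> complex) set" where
  "R_all_gens m = {mono_fun a | a. a \<in> monomials m}"

end

theory Submission
  imports Defs "HOL-Combinatorics.Orbits" "HOL-Computational_Algebra.Polynomial" "HOL-Library.FuncSet"
begin

definition stab :: "(nat \<Rightarrow> nat) \<Rightarrow> nat set \<Rightarrow> bool" where
  "stab g A \<longleftrightarrow> (\<forall>x\<in>A. g x \<in> A)"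

definition cycset :: "nat \<Rightarrow> nat set \<Rightarrow> (nat \<Rightarrow> nat) \<Rightarrow> nat set set" where
  "cycset k A g = {C. \<exists>x\<in>A. C = cyc g x \<and> card C = k}"

definition cnt :: "nat \<Rightarrow> nat set \<Rightarrow> (nat \<Rightarrow> nat) \<Rightarrow> nat" where
  "cnt k A g = card (cycset k A g)"

lemma num_cycles_cnt: "num_cycles k n g = cnt k {..<n} g"
  unfolding num_cycles_def cnt_def cycset_def by (auto intro!: arg_cong[where f=card])

lemma cyc_orbit: "permutation g \<Longrightarrow> cyc g x = orbit g x"
  unfolding cyc_def by (simp add: orbit_altdef_permutation)

lemma cyc_self: "x \<in> cyc g x"
  unfolding cyc_def by (auto intro: exI[of _ 0])

lemma cyc_funpow: "(g ^^ j) x \<in> cyc g x"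
  unfolding cyc_def by auto

lemma cyc_fin: "permutation g \<Longrightarrow> finite (cyc g x)"
  by (simp add: cyc_orbit finite_orbit permutation_self_in_orbit)

lemma cyc_card_pos: "permutation g \<Longrightarrow> card (cyc g x) > 0"
  using cyc_fin cyc_self by (metis card_gt_0_iff empty_iff)

lemma cyc_card_dist: "permutation g \<Longrightarrow> card (cyc g x) = funpow_dist1 g x x"
proof -
  assume p: "permutation g"
  have xo: "x \<in> orbit g x" using p by (rule permutation_self_in_orbit)
  show ?thesis
    unfolding cyc_orbit[OF p] orbit_conv_funpow_dist1[OF xo]
    using inj_on_funpow_dist1[OF xo] card_image by fastforce
qed

lemma cyc_period: "permutation g \<Longrightarrow> (g ^^ card (cyc g x)) x = x"
  using cyc_card_dist funpow_dist1_prop permutation_self_in_orbit by metis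

lemma cyc_funpow_mod: "permutation g \<Longrightarrow> (g ^^ a) x = (g ^^ (a mod card (cyc g x))) x"
  using cyc_period funpow_mod_eq by metis

lemma cyc_funpow_iff:
  assumes p: "permutation g"
  shows "(g ^^ a) x = (g ^^ b) x \<longleftrightarrow> a mod card (cyc g x) = b mod card (cyc g x)"
proof
  let ?k = "card (cyc g x)"
  have xo: "x \<in> orbit g x" using p by (rule permutation_self_in_orbit)
  have inj: "inj_on (\<lambda>n. (g ^^ n) x) {0..<?k}"
    using inj_on_funpow_dist1[OF xo] cyc_card_dist[OF p] by simp
  have kp: "?k > 0" using cyc_card_pos[OF p] .
  assume "(g ^^ a) x = (g ^^ b) x"
  hence "(g ^^ (a mod ?k)) x = (g ^^ (b mod ?k)) x" using cyc_funpow_mod[OF p] by metis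
  then show "a mod ?k = b mod ?k" using inj kp by (auto dest: inj_onD)
next
  assume "a mod card (cyc g x) = b mod card (cyc g x)"
  then show "(g ^^ a) x = (g ^^ b) x" using cyc_funpow_mod[OF p] by metis
qed

lemma cyc_eq:
  assumes p: "permutation g" and y: "y \<in> cyc g x"
  shows "cyc g y = cyc g x"
proof -
  have yo: "y \<in> orbit g x" using y cyc_orbit[OF p] by simp
  have xo: "x \<in> orbit g x" using p by (rule permutation_self_in_orbit)
  have "x \<in> orbit g y" using orbit_swap[OF xo yo] .
  then show ?thesis unfolding cyc_orbit[OF p]
    using yo by (auto intro: orbit_trans)
qed

lemma funpow_stab: "stab g A \<Longrightarrow> x \<in> A \<Longrightarrow> (g ^^ j) x \<in> A"
  by (induct j) (auto simp: stab_def)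

lemma cyc_sub: "stab g A \<Longrightarrow> x \<in> A \<Longrightarrow> cyc g x \<subseteq> A"
  unfolding cyc_def using funpow_stab by blast

lemma funpow_congr:
  "stab g A \<Longrightarrow> (\<forall>z\<in>A. g z = g' z) \<Longrightarrow> x \<in> A \<Longrightarrow> (g ^^ j) x = (g' ^^ j) x"
proof (induct j)
  case (Suc j)
  then show ?case using funpow_stab[of g A x j] by simp
qed simp

lemma cyc_congr:
  "stab g A \<Longrightarrow> (\<forall>z\<in>A. g z = g' z) \<Longrightarrow> x \<in> A \<Longrightarrow> cyc g x = cyc g' x"
  unfolding cyc_def using funpow_congr[of g A g' x] by metis

lemma funpow_conj:
  "stab \<rho> A \<Longrightarrow> (\<forall>z\<in>A. \<sigma> (h z) = h (\<rho> z)) \<Longrightarrow> x \<in> A \<Longrightarrow> (\<sigma> ^^ j) (h x) = h ((\<rho> ^^ j) x)"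
proof (induct j)
  case (Suc j)
  then show ?case using funpow_stab[of \<rho> A x j] by simp
qed simp

lemma cyc_conj:
  "stab \<rho> A \<Longrightarrow> (\<forall>z\<in>A. \<sigma> (h z) = h (\<rho> z)) \<Longrightarrow> x \<in> A \<Longrightarrow> cyc \<sigma> (h x) = h ` cyc \<rho> x"
  unfolding cyc_def using funpow_conj[of \<rho> A \<sigma> h x] by auto

lemma stab_diff:
  assumes p: "permutation g" and s: "stab g A" and x: "x \<in> A"
  shows "stab g (A - cyc g x)"
  unfolding stab_def
proof
  fix z assume z: "z \<in> A - cyc g x"
  have "g z \<in> A" using s z by (auto simp: stab_def)
  moreover have "g z \<notin> cyc g x"
  proof
    assume "g z \<in> cyc g x"
    hence "cyc g (g z) = cyc g x" using cyc_eq[OF p] by blast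
    moreover have "cyc g (g z) = cyc g z"
      using p by (simp add: cyc_orbit permutation_orbit_step)
    ultimately show False using z cyc_self by blast
  qed
  ultimately show "g z \<in> A - cyc g x" by blast
qed

lemma cycset_fin: "finite A \<Longrightarrow> finite (cycset k A g)"
proof -
  assume "finite A"
  have "cycset k A g \<subseteq> (\<lambda>x. cyc g x) ` A" unfolding cycset_def by auto
  then show ?thesis using \<open>finite A\<close> finite_subset by blast
qed

lemma cnt_remove:
  assumes p: "permutation g" and f: "finite A" and s: "stab g A" and x: "x \<in> A"
  shows "cnt k A g = cnt k (A - cyc g x) g + (if card (cyc g x) = k then 1 else 0)"
proof -
  let ?C = "cyc g x"
  have eq: "cycset k A g = cycset k (A - ?C) g \<union> (if card ?C = k then {?C} else {})"
  proof (intro set_eqI iffI)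
    fix D assume "D \<in> cycset k A g"
    then obtain z where z: "z \<in> A" "D = cyc g z" "card D = k" unfolding cycset_def by auto
    show "D \<in> cycset k (A - ?C) g \<union> (if card ?C = k then {?C} else {})"
    proof (cases "z \<in> ?C")
      case True
      then have "D = ?C" using cyc_eq[OF p] z by simp
      then show ?thesis using z by simp
    next
      case False
      then show ?thesis using z unfolding cycset_def by auto
    qed
  next
    fix D assume "D \<in> cycset k (A - ?C) g \<union> (if card ?C = k then {?C} else {})"
    then show "D \<in> cycset k A g" using x unfolding cycset_def
      by (auto split: if_splits)
  qed
  have nin: "?C \<notin> cycset k (A - ?C) g"
  proof
    assume "?C \<in> cycset k (A - ?C) g"
    then obtain z where "z \<in> A - ?C" "?C = cyc g z" unfolding cycset_def by auto
    then show False using cyc_self[of z g] by auto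
  qed
  have fin: "finite (cycset k (A - ?C) g)" using f by (simp add: cycset_fin)
  show ?thesis unfolding cnt_def eq
    using nin fin by (auto simp: card_insert_if)
qed

lemma cnt_zero:
  assumes p: "permutation g" and f: "finite A" and s: "stab g A" and k: "k = 0 \<or> card A < k"
  shows "cnt k A g = 0"
proof -
  have "cycset k A g = {}"
  proof (rule ccontr)
    assume "cycset k A g \<noteq> {}"
    then obtain z where z: "z \<in> A" "card (cyc g z) = k" unfolding cycset_def by auto
    have "card (cyc g z) \<le> card A" using cyc_sub[OF s z(1)] f card_mono by blast
    then show False using cyc_card_pos[OF p, of z] z k by auto
  qed
  then show ?thesis unfolding cnt_def by simp
qed

lemma cnt_invariant:
  assumes f: "finite A" and s: "stab \<rho> A" and inj: "inj_on h A"
    and c: "\<forall>z\<in>A. \<sigma> (h z) = h (\<rho> z)"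
  shows "cnt k (h ` A) \<sigma> = cnt k A \<rho>"
proof -
  have eq: "cycset k (h ` A) \<sigma> = (\<lambda>C. h ` C) ` cycset k A \<rho>"
  proof (intro set_eqI iffI)
    fix D assume "D \<in> cycset k (h ` A) \<sigma>"
    then obtain z where z: "z \<in> A" "D = cyc \<sigma> (h z)" "card D = k" unfolding cycset_def by auto
    have D: "D = h ` cyc \<rho> z" using cyc_conj[OF s c z(1)] z by simp
    have "card (cyc \<rho> z) = k" using z D card_image inj cyc_sub[OF s z(1)]
      by (metis inj_on_subset)
    then show "D \<in> (\<lambda>C. h ` C) ` cycset k A \<rho>" using D z unfolding cycset_def by auto
  next
    fix D assume "D \<in> (\<lambda>C. h ` C) ` cycset k A \<rho>"
    then obtain z where z: "z \<in> A" "D = h ` cyc \<rho> z" "card (cyc \<rho> z) = k"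
      unfolding cycset_def by auto
    have "D = cyc \<sigma> (h z)" using cyc_conj[OF s c z(1)] z by simp
    moreover have "card D = k" using z card_image inj cyc_sub[OF s z(1)]
      by (metis inj_on_subset)
    ultimately show "D \<in> cycset k (h ` A) \<sigma>" using z unfolding cycset_def by auto
  qed
  have "inj_on (\<lambda>C. h ` C) (cycset k A \<rho>)"
  proof (rule inj_onI)
    fix C1 C2 assume "C1 \<in> cycset k A \<rho>" "C2 \<in> cycset k A \<rho>" "h ` C1 = h ` C2"
    moreover have "C1 \<subseteq> A" "C2 \<subseteq> A" using calculation(1,2) cyc_sub[OF s]
      unfolding cycset_def by auto
    ultimately show "C1 = C2" using inj by (simp add: inj_on_image_eq_iff)
  qed
  then show ?thesis unfolding cnt_def eq by (simp add: card_image)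
qed

lemma cnt_empty: "cnt k {} g = 0"
  unfolding cnt_def cycset_def by simp

lemma cnt_pos: "finite A \<Longrightarrow> y \<in> A \<Longrightarrow> cnt (card (cyc g y)) A g > 0"
proof -
  assume f: "finite A" and y: "y \<in> A"
  have "cyc g y \<in> cycset (card (cyc g y)) A g" using y unfolding cycset_def by auto
  then show ?thesis unfolding cnt_def using cycset_fin[OF f] card_gt_0_iff by blast
qed

lemma cyc_iso:
  assumes "permutation \<rho>" "permutation \<sigma>"
  shows "finite A \<Longrightarrow> stab \<rho> A \<Longrightarrow> finite B \<Longrightarrow> stab \<sigma> B \<Longrightarrow> (\<forall>k. cnt k A \<rho> = cnt k B \<sigma>)
     \<Longrightarrow> \<exists>h. bij_betw h A B \<and> (\<forall>z\<in>A. \<sigma> (h z) = h (\<rho> z))"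
proof (induct "card A" arbitrary: A B rule: less_induct)
  case less
  note pr = assms(1) and ps = assms(2)
  show ?case
  proof (cases "A = {}")
    case True
    have "B = {}"
    proof (rule ccontr)
      assume "B \<noteq> {}"
      then obtain y where y: "y \<in> B" by auto
      have "cnt (card (cyc \<sigma> y)) B \<sigma> > 0" using cnt_pos[OF less(4) y] .
      moreover have "cnt (card (cyc \<sigma> y)) B \<sigma> = 0" using less(6) True cnt_empty by metis
      ultimately show False by simp
    qed
    then show ?thesis using True by (auto simp: bij_betw_def)
  next
    case False
    then obtain x where x: "x \<in> A" by auto
    define C where "C = cyc \<rho> x"
    define k where "k = card C"
    have "cnt k A \<rho> > 0" using cnt_pos[OF less(2) x] unfolding k_def C_def .
    then have "cnt k B \<sigma> > 0" using less(6) by simp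
    then have "cycset k B \<sigma> \<noteq> {}" unfolding cnt_def by auto
    then obtain y where y: "y \<in> B" "card (cyc \<sigma> y) = k" unfolding cycset_def by auto
    define D where "D = cyc \<sigma> y"
    have CA: "C \<subseteq> A" using cyc_sub[OF less(3) x] C_def by simp
    have DB: "D \<subseteq> B" using cyc_sub[OF less(5) y(1)] D_def by simp
    have sA: "stab \<rho> (A - C)" using stab_diff[OF pr less(3) x] C_def by simp
    have sB: "stab \<sigma> (B - D)" using stab_diff[OF ps less(5) y(1)] D_def by simp
    have cnteq: "\<forall>j. cnt j (A - C) \<rho> = cnt j (B - D) \<sigma>"
    proof
      fix j
      have "cnt j A \<rho> = cnt j (A - C) \<rho> + (if k = j then 1 else 0)"
        using cnt_remove[OF pr less(2) less(3) x] C_def k_def by simp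
      moreover have "cnt j B \<sigma> = cnt j (B - D) \<sigma> + (if k = j then 1 else 0)"
        using cnt_remove[OF ps less(4) less(5) y(1)] D_def y(2) by simp
      ultimately show "cnt j (A - C) \<rho> = cnt j (B - D) \<sigma>" using less(6) by simp
    qed
    have lt: "card (A - C) < card A"
      using x cyc_self[of x \<rho>] C_def less(2) by (intro psubset_card_mono) auto
    obtain h0 where h0: "bij_betw h0 (A - C) (B - D)" "\<forall>z\<in>A - C. \<sigma> (h0 z) = h0 (\<rho> z)"
      using less(1)[OF lt _ sA _ sB cnteq] less(2) less(4) by blast
    define h where "h z = (if z \<in> C then (\<sigma> ^^ funpow_dist \<rho> x z) y else h0 z)" for z
    have kD: "card D = k" using y(2) D_def by simp
    have key: "h ((\<rho> ^^ j) x) = (\<sigma> ^^ j) y" for j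
    proof -
      let ?z = "(\<rho> ^^ j) x"
      have zC: "?z \<in> C" unfolding C_def by (rule cyc_funpow)
      have "?z \<in> orbit \<rho> x" using zC cyc_orbit[OF pr] C_def by simp
      then have "(\<rho> ^^ funpow_dist \<rho> x ?z) x = (\<rho> ^^ j) x" by (rule funpow_dist_prop)
      then have "funpow_dist \<rho> x ?z mod k = j mod k"
        using cyc_funpow_iff[OF pr] k_def C_def by simp
      then have "(\<sigma> ^^ funpow_dist \<rho> x ?z) y = (\<sigma> ^^ j) y"
        using cyc_funpow_iff[OF ps] kD D_def by simp
      then show ?thesis using zC h_def by simp
    qed
    have Cj: "z \<in> C \<longleftrightarrow> (\<exists>j. z = (\<rho> ^^ j) x)" for z unfolding C_def cyc_def by auto
    have Dj: "z \<in> D \<longleftrightarrow> (\<exists>j. z = (\<sigma> ^^ j) y)" for z unfolding D_def cyc_def by auto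
    have bC: "bij_betw h C D"
      unfolding bij_betw_def
    proof
      show "inj_on h C"
      proof (rule inj_onI)
        fix a b assume "a \<in> C" "b \<in> C" "h a = h b"
        then obtain i j where ij: "a = (\<rho> ^^ i) x" "b = (\<rho> ^^ j) x" using Cj by blast
        then have "(\<sigma> ^^ i) y = (\<sigma> ^^ j) y" using \<open>h a = h b\<close> key by simp
        then have "i mod k = j mod k" using cyc_funpow_iff[OF ps] kD D_def by simp
        then show "a = b" using ij cyc_funpow_iff[OF pr] k_def C_def by simp
      qed
      show "h ` C = D"
      proof (intro set_eqI iffI)
        fix z assume "z \<in> h ` C"
        then obtain a where a: "a \<in> C" "z = h a" by blast
        then obtain j where "a = (\<rho> ^^ j) x" using Cj by blast
        then have "z = (\<sigma> ^^ j) y" using key a by simp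
        then show "z \<in> D" using Dj by blast
      next
        fix z assume "z \<in> D"
        then obtain j where "z = (\<sigma> ^^ j) y" using Dj by blast
        then have "z = h ((\<rho> ^^ j) x)" using key by simp
        then show "z \<in> h ` C" using Cj by blast
      qed
    qed
    have bA: "bij_betw h (A - C) (B - D)"
      using h0(1) by (rule bij_betw_cong[THEN iffD1, rotated]) (simp add: h_def)
    have "bij_betw h (C \<union> (A - C)) (D \<union> (B - D))"
      by (rule bij_betw_combine[OF bC bA]) auto
    moreover have "C \<union> (A - C) = A" "D \<union> (B - D) = B" using CA DB by auto
    ultimately have bij: "bij_betw h A B" by simp
    have eqv: "\<forall>z\<in>A. \<sigma> (h z) = h (\<rho> z)"
    proof
      fix z assume zA: "z \<in> A"
      show "\<sigma> (h z) = h (\<rho> z)"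
      proof (cases "z \<in> C")
        case True
        then obtain j where j: "z = (\<rho> ^^ j) x" using Cj by blast
        have "\<rho> z = (\<rho> ^^ Suc j) x" using j by simp
        then have "h (\<rho> z) = (\<sigma> ^^ Suc j) y" using key by metis
        then show ?thesis using key j by simp
      next
        case False
        then have zA': "z \<in> A - C" using zA by simp
        then have "\<rho> z \<in> A - C" using sA by (simp add: stab_def)
        then show ?thesis using h0(2) zA' False h_def by simp
      qed
    qed
    show ?thesis using bij eqv by blast
  qed
qed

lemma cnt_sum:
  assumes "permutation g"
  shows "finite A \<Longrightarrow> stab g A \<Longrightarrow> card A \<le> N \<Longrightarrow> (\<Sum>k\<in>{1..N}. k * cnt k A g) = card A"
proof (induct "card A" arbitrary: A rule: less_induct)
  case less
  show ?case
  proof (cases "A = {}")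
    case True
    then show ?thesis by (simp add: cnt_empty)
  next
    case False
    then obtain x where x: "x \<in> A" by auto
    define C where "C = cyc g x"
    have CA: "C \<subseteq> A" using cyc_sub[OF less(3) x] C_def by simp
    have xC: "x \<in> C" using cyc_self C_def by simp
    have cle: "card C \<le> card A" using CA less(2) card_mono by blast
    have cA: "card A = card (A - C) + card C"
      using CA less(2) cle card_Diff_subset[of C A] finite_subset[OF CA] by simp
    have lt: "card (A - C) < card A" using cA cyc_card_pos[OF assms] C_def by simp
    have sA: "stab g (A - C)" using stab_diff[OF assms less(3) x] C_def by simp
    have IH: "(\<Sum>k\<in>{1..N}. k * cnt k (A - C) g) = card (A - C)"
      using less(1)[OF lt _ sA] less(2,4) lt by simp
    have c1: "card C \<ge> 1" using cyc_card_pos[OF assms, of x] C_def by simp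
    have cC: "card C \<in> {1..N}" using c1 cA less(4) by simp
    have "(\<Sum>k\<in>{1..N}. k * cnt k A g) = (\<Sum>k\<in>{1..N}. k * cnt k (A - C) g + (if k = card C then k else 0))"
      using cnt_remove[OF assms less(2,3) x] C_def by (intro sum.cong) auto
    also have "\<dots> = card (A - C) + card C"
      using IH cC by (simp add: sum.distrib)
    finally show ?thesis using cA by simp
  qed
qed

definition ext_blk :: "(nat \<Rightarrow> nat) \<Rightarrow> nat \<Rightarrow> nat \<Rightarrow> nat \<Rightarrow> nat" where
  "ext_blk \<rho> n k = (\<lambda>x. if x < n then \<rho> x else if x < n + k then n + (x - n + 1) mod k else x)"

lemma rot_mod: "a < k \<Longrightarrow> Suc a mod k = (if Suc a = k then 0 else Suc a)"
  by (cases "Suc a = k") auto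

lemma rot_inj: "a < k \<Longrightarrow> b < k \<Longrightarrow> Suc a mod k = Suc b mod k \<Longrightarrow> a = b"
  using rot_mod[of a k] rot_mod[of b k] by (auto split: if_splits)

lemma ext_blk_funpow:
  assumes "k \<ge> 1"
  shows "(ext_blk \<rho> n k ^^ j) n = n + j mod k"
proof (induct j)
  case 0 then show ?case by simp
next
  case (Suc j)
  have "j mod k < k" using assms by simp
  then show ?case using Suc by (simp add: ext_blk_def mod_Suc_eq)
qed

lemma blk_perm:
  assumes p: "\<rho> permutes {..<n}" and k: "k \<ge> 1"
  shows "ext_blk \<rho> n k permutes {..<n+k}"
proof -
  let ?r = "ext_blk \<rho> n k"
  have b1: "bij_betw ?r {..<n} {..<n}"
  proof -
    have "bij_betw ?r {..<n} {..<n} = bij_betw \<rho> {..<n} {..<n}"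
      by (rule bij_betw_cong) (simp add: ext_blk_def)
    then show ?thesis using permutes_imp_bij[OF p] by simp
  qed
  have inj2: "inj_on ?r {n..<n+k}"
  proof (rule inj_onI)
    fix x y assume x: "x \<in> {n..<n+k}" and y: "y \<in> {n..<n+k}" and e: "?r x = ?r y"
    have rx: "?r x = n + Suc (x - n) mod k" using x by (simp add: ext_blk_def)
    have ry: "?r y = n + Suc (y - n) mod k" using y by (simp add: ext_blk_def)
    have "Suc (x - n) mod k = Suc (y - n) mod k" using e rx ry by simp
    moreover have "x - n < k" "y - n < k" using x y by auto
    ultimately have "x - n = y - n" using rot_inj by blast
    then show "x = y" using x y by (metis atLeastLessThan_iff le_add_diff_inverse)
  qed
  have im2: "?r ` {n..<n+k} \<subseteq> {n..<n+k}"
  proof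
    fix z assume "z \<in> ?r ` {n..<n+k}"
    then obtain x where x: "x \<in> {n..<n+k}" "z = ?r x" by blast
    have "z = n + Suc (x - n) mod k" using x by (simp add: ext_blk_def)
    moreover have "Suc (x - n) mod k < k" using k by simp
    ultimately show "z \<in> {n..<n+k}" by simp
  qed
  have b2: "bij_betw ?r {n..<n+k} {n..<n+k}"
    using inj2 im2 endo_inj_surj[of "{n..<n+k}" ?r] by (simp add: bij_betw_def)
  have "bij_betw ?r ({..<n} \<union> {n..<n+k}) ({..<n} \<union> {n..<n+k})"
    by (rule bij_betw_combine[OF b1 b2]) auto
  moreover have "{..<n} \<union> {n..<n+k} = {..<n+k}" by auto
  ultimately have b: "bij_betw ?r {..<n+k} {..<n+k}" by simp
  show ?thesis
    by (rule bij_imp_permutes[OF b]) (simp add: ext_blk_def)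
qed

lemma blk_cyc:
  assumes k: "k \<ge> 1"
  shows "cyc (ext_blk \<rho> n k) n = {n..<n+k}"
proof (intro set_eqI iffI)
  fix z assume "z \<in> cyc (ext_blk \<rho> n k) n"
  then obtain j where j: "z = (ext_blk \<rho> n k ^^ j) n" unfolding cyc_def by auto
  have "j mod k < k" using k by simp
  then show "z \<in> {n..<n+k}" using ext_blk_funpow[OF k] j by simp
next
  fix z assume z: "z \<in> {n..<n+k}"
  then have "(z - n) mod k = z - n" by (intro mod_less) auto
  then have "z = (ext_blk \<rho> n k ^^ (z - n)) n" using ext_blk_funpow[OF k, where j="z - n"] z by simp
  then show "z \<in> cyc (ext_blk \<rho> n k) n" using cyc_funpow by metis
qed

lemma blk_same:
  assumes p: "\<rho> permutes {..<n}"
  shows "cnt j {..<n} (ext_blk \<rho> n k) = cnt j {..<n} \<rho>"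
proof -
  have stn: "stab \<rho> {..<n}" using permutes_in_image[OF p] unfolding stab_def by simp
  have agree: "\<forall>z\<in>{..<n}. \<rho> z = ext_blk \<rho> n k z" by (simp add: ext_blk_def)
  have "cyc \<rho> x = cyc (ext_blk \<rho> n k) x" if "x < n" for x
    using cyc_congr[OF stn agree] that by simp
  then have "cycset j {..<n} (ext_blk \<rho> n k) = cycset j {..<n} \<rho>" unfolding cycset_def
    by (metis (no_types, lifting) lessThan_iff)
  then show ?thesis unfolding cnt_def by simp
qed

lemma ext_blk:
  assumes p: "\<rho> permutes {..<n}" and k: "k \<ge> 1"
  shows "ext_blk \<rho> n k permutes {..<n+k}
    \<and> (\<forall>j. cnt j {..<n+k} (ext_blk \<rho> n k) = cnt j {..<n} \<rho> + (if j = k then 1 else 0))"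
proof -
  let ?r = "ext_blk \<rho> n k"
  have perm: "?r permutes {..<n+k}" using blk_perm[OF p k] .
  have pr: "permutation ?r" unfolding permutation_permutes using perm by blast
  have st: "stab ?r {..<n+k}" using permutes_in_image[OF perm] unfolding stab_def by simp
  have diff: "{..<n+k} - cyc ?r n = {..<n}" using blk_cyc[OF k] by auto
  have nin: "n \<in> {..<n+k}" using k by simp
  have ck: "card (cyc ?r n) = k" using blk_cyc[OF k] by simp
  have "cnt j {..<n+k} ?r = cnt j {..<n} ?r + (if card (cyc ?r n) = j then 1 else 0)" for j
    using cnt_remove[OF pr _ st nin, of j] diff by simp
  then have "cnt j {..<n+k} ?r = cnt j {..<n} \<rho> + (if j = k then 1 else 0)" for j
    using blk_same[OF p, of j k] ck by auto
  then show ?thesis using perm by simp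
qed

lemma realize1:
  "\<forall>t::nat \<Rightarrow> nat. M = sum t {1..N} \<longrightarrow> (\<forall>k. t k \<noteq> 0 \<longrightarrow> 1 \<le> k \<and> k \<le> N) \<longrightarrow>
     (\<exists>n \<rho>. \<rho> permutes {..<n} \<and> (\<forall>k. cnt k {..<n} \<rho> = t k) \<and> n = (\<Sum>k\<in>{1..N}. k * t k))"
proof (induct M)
  case 0
  show ?case
  proof (intro allI impI)
    fix t :: "nat \<Rightarrow> nat" assume t0: "0 = sum t {1..N}" and ts: "\<forall>k. t k \<noteq> 0 \<longrightarrow> 1 \<le> k \<and> k \<le> N"
    have z: "\<forall>k\<in>{1..N}. t k = 0" using t0[symmetric] by simp
    have tz: "t k = 0" for k
    proof (rule ccontr)
      assume "t k \<noteq> 0"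
      then have "k \<in> {1..N}" using ts by simp
      then show False using z \<open>t k \<noteq> 0\<close> by simp
    qed
    show "\<exists>n \<rho>. \<rho> permutes {..<n} \<and> (\<forall>k. cnt k {..<n} \<rho> = t k) \<and> n = (\<Sum>k\<in>{1..N}. k * t k)"
      by (intro exI[of _ 0] exI[of _ id]) (simp add: cnt_empty permutes_id tz)
  qed
next
  case (Suc M)
  show ?case
  proof (intro allI impI)
    fix t :: "nat \<Rightarrow> nat" assume tM: "Suc M = sum t {1..N}" and ts: "\<forall>k. t k \<noteq> 0 \<longrightarrow> 1 \<le> k \<and> k \<le> N"
    have "\<exists>k0\<in>{1..N}. t k0 > 0"
    proof (rule ccontr)
      assume "\<not> (\<exists>k0\<in>{1..N}. t k0 > 0)"
      then have "sum t {1..N} = 0" by simp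
      then show False using tM by simp
    qed
    then obtain k0 where k0: "k0 \<in> {1..N}" "t k0 > 0" by blast
    define t' where "t' = t(k0 := t k0 - 1)"
    have s1: "sum t {1..N} = sum t' {1..N} + 1"
    proof -
      have "sum t {1..N} = t k0 + sum t ({1..N} - {k0})" using k0 by (simp add: sum.remove)
      moreover have "sum t' {1..N} = t' k0 + sum t' ({1..N} - {k0})" using k0 by (simp add: sum.remove)
      moreover have "sum t' ({1..N} - {k0}) = sum t ({1..N} - {k0})" by (intro sum.cong) (auto simp: t'_def)
      ultimately show ?thesis using k0 by (simp add: t'_def)
    qed
    have s2: "(\<Sum>k\<in>{1..N}. k * t k) = (\<Sum>k\<in>{1..N}. k * t' k) + k0"
    proof -
      have "(\<Sum>k\<in>{1..N}. k * t k) = k0 * t k0 + (\<Sum>k\<in>{1..N} - {k0}. k * t k)" using k0 by (simp add: sum.remove)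
      moreover have "(\<Sum>k\<in>{1..N}. k * t' k) = k0 * t' k0 + (\<Sum>k\<in>{1..N} - {k0}. k * t' k)" using k0 by (simp add: sum.remove)
      moreover have "(\<Sum>k\<in>{1..N} - {k0}. k * t' k) = (\<Sum>k\<in>{1..N} - {k0}. k * t k)" by (intro sum.cong) (auto simp: t'_def)
      moreover have "k0 * t k0 = k0 * t' k0 + k0" using k0(2) by (cases "t k0") (auto simp: t'_def)
      ultimately show ?thesis by simp
    qed
    have ts': "\<forall>k. t' k \<noteq> 0 \<longrightarrow> 1 \<le> k \<and> k \<le> N" using ts by (auto simp: t'_def)
    have Mt: "M = sum t' {1..N}" using tM s1 by simp
    obtain n \<rho> where IH: "\<rho> permutes {..<n}" "\<forall>k. cnt k {..<n} \<rho> = t' k" "n = (\<Sum>k\<in>{1..N}. k * t' k)"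
      using Suc[THEN spec, of t', THEN mp, OF Mt, THEN mp, OF ts'] by blast
    have k1: "k0 \<ge> 1" using k0 by simp
    note E = ext_blk[OF IH(1) k1]
    have "cnt k {..<n+k0} (ext_blk \<rho> n k0) = t k" for k
      using E IH(2) k0(2) by (auto simp: t'_def)
    then show "\<exists>n \<rho>. \<rho> permutes {..<n} \<and> (\<forall>k. cnt k {..<n} \<rho> = t k) \<and> n = (\<Sum>k\<in>{1..N}. k * t k)"
      using E s2 IH(3) by (intro exI[of _ "n + k0"] exI[of _ "ext_blk \<rho> n k0"]) simp
  qed
qed

lemma cyc_stab: "stab g (cyc g w)"
  unfolding stab_def cyc_def by (auto intro: exI[of _ "Suc j" for j])

lemma count_sets:
  assumes p: "permutation \<sigma>" and fB: "finite B" and sB: "stab \<sigma> B" and N: "card B \<le> N"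
    and t: "\<forall>k. t k \<noteq> 0 \<longrightarrow> 1 \<le> k \<and> k \<le> N"
  shows "card {S. S \<subseteq> B \<and> stab \<sigma> S \<and> (\<forall>k. cnt k S \<sigma> = t k)} = (\<Prod>k\<in>{1..N}. cnt k B \<sigma> choose t k)"
proof -
  define SS where "SS = {S. S \<subseteq> B \<and> stab \<sigma> S \<and> (\<forall>k. cnt k S \<sigma> = t k)}"
  define PP where "PP = PiE {1..N} (\<lambda>k. {Q. Q \<subseteq> cycset k B \<sigma> \<and> card Q = t k})"
  define \<Psi> where "\<Psi> S = (\<lambda>k\<in>{1..N}. cycset k S \<sigma>)" for S
  define \<Psi>' where "\<Psi>' Q = (\<Union>k\<in>{1..N}. \<Union>(Q k))" for Q :: "nat \<Rightarrow> nat set set"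
  have cardS: "card S \<le> N" if "S \<subseteq> B" for S using card_mono[OF fB that] N by simp
  have F1: "\<Psi>' (\<Psi> S) = S" if S: "S \<in> SS" for S
  proof (intro set_eqI iffI)
    fix z assume "z \<in> \<Psi>' (\<Psi> S)"
    then obtain k C where "k \<in> {1..N}" "C \<in> cycset k S \<sigma>" "z \<in> C" unfolding \<Psi>'_def \<Psi>_def by auto
    then show "z \<in> S" using S cyc_sub unfolding SS_def cycset_def by blast
  next
    fix z assume z: "z \<in> S"
    have SB: "S \<subseteq> B" "stab \<sigma> S" using S unfolding SS_def by auto
    let ?k = "card (cyc \<sigma> z)"
    have "?k \<ge> 1" using cyc_card_pos[OF p, of z] by simp
    moreover have "?k \<le> card S" using cyc_sub[OF SB(2) z] card_mono finite_subset[OF SB(1) fB] by blast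
    ultimately have k: "?k \<in> {1..N}" using cardS[OF SB(1)] by simp
    have "cyc \<sigma> z \<in> cycset ?k S \<sigma>" using z unfolding cycset_def by auto
    then show "z \<in> \<Psi>' (\<Psi> S)" using k cyc_self[of z \<sigma>] unfolding \<Psi>'_def \<Psi>_def by auto
  qed
  have Qform: "\<exists>w\<in>B. C = cyc \<sigma> w \<and> card C = k" if "Q \<in> PP" "k \<in> {1..N}" "C \<in> Q k" for Q k C
    using that unfolding PP_def cycset_def by (auto simp: PiE_def Pi_def)
  have F2: "cycset k (\<Psi>' Q) \<sigma> = Q k" if Q: "Q \<in> PP" and k: "k \<in> {1..N}" for Q k
  proof (intro set_eqI iffI)
    fix C assume "C \<in> cycset k (\<Psi>' Q) \<sigma>"
    then obtain z where z: "z \<in> \<Psi>' Q" "C = cyc \<sigma> z" "card C = k" unfolding cycset_def by auto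
    then obtain k' C' where C': "k' \<in> {1..N}" "C' \<in> Q k'" "z \<in> C'" unfolding \<Psi>'_def by auto
    then obtain w where w: "C' = cyc \<sigma> w" "card C' = k'" using Qform[OF Q] by blast
    then have "C = C'" using cyc_eq[OF p] C'(3) z(2) by simp
    then show "C \<in> Q k" using z(3) w(2) C'(2) by simp
  next
    fix C assume C: "C \<in> Q k"
    then obtain w where w: "w \<in> B" "C = cyc \<sigma> w" "card C = k" using Qform[OF Q k] by blast
    have "w \<in> \<Psi>' Q" using C k w cyc_self[of w \<sigma>] unfolding \<Psi>'_def by auto
    then show "C \<in> cycset k (\<Psi>' Q) \<sigma>" using w unfolding cycset_def by auto
  qed
  have F3: "\<Psi> S \<in> PP" if S: "S \<in> SS" for S
  proof -
    have "cycset k S \<sigma> \<subseteq> cycset k B \<sigma>" for k using S unfolding SS_def cycset_def by auto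
    moreover have "card (cycset k S \<sigma>) = t k" for k using S unfolding SS_def cnt_def by auto
    ultimately show ?thesis unfolding PP_def \<Psi>_def by auto
  qed
  have F4: "\<Psi>' Q \<in> SS" if Q: "Q \<in> PP" for Q
  proof -
    have sub: "\<Psi>' Q \<subseteq> B"
    proof
      fix z assume "z \<in> \<Psi>' Q"
      then obtain k C where "k \<in> {1..N}" "C \<in> Q k" "z \<in> C" unfolding \<Psi>'_def by auto
      then show "z \<in> B" using Qform[OF Q] cyc_sub[OF sB] by blast
    qed
    have st: "stab \<sigma> (\<Psi>' Q)" unfolding stab_def
    proof
      fix z assume "z \<in> \<Psi>' Q"
      then obtain k C where kC: "k \<in> {1..N}" "C \<in> Q k" "z \<in> C" unfolding \<Psi>'_def by auto
      then obtain w where "C = cyc \<sigma> w" using Qform[OF Q] by blast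
      then have "\<sigma> z \<in> C" using kC(3) cyc_stab[of \<sigma> w] unfolding stab_def by blast
      then show "\<sigma> z \<in> \<Psi>' Q" using kC unfolding \<Psi>'_def by auto
    qed
    have "cnt k (\<Psi>' Q) \<sigma> = t k" for k
    proof (cases "k \<in> {1..N}")
      case True
      have "Q k \<in> {Q. Q \<subseteq> cycset k B \<sigma> \<and> card Q = t k}"
        using Q True unfolding PP_def by (rule PiE_mem)
      then show ?thesis using F2[OF Q True] unfolding cnt_def by simp
    next
      case False
      have cN: "card (\<Psi>' Q) \<le> N" using cardS[OF sub] .
      have nk: "\<not> (1 \<le> k \<and> k \<le> N)" using False by simp
      have disj: "k = 0 \<or> card (\<Psi>' Q) < k" using nk cN by linarith
      have c0: "cnt k (\<Psi>' Q) \<sigma> = 0"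
        by (rule cnt_zero[OF p finite_subset[OF sub fB] st disj])
      have t0: "t k = 0"
      proof (rule ccontr)
        assume "t k \<noteq> 0"
        then have "1 \<le> k \<and> k \<le> N" using t by blast
        then show False using nk by blast
      qed
      show ?thesis using c0 t0 by simp
    qed
    then show ?thesis using sub st unfolding SS_def by auto
  qed
  have F5: "\<Psi> (\<Psi>' Q) = Q" if Q: "Q \<in> PP" for Q
  proof
    fix k show "\<Psi> (\<Psi>' Q) k = Q k"
    proof (cases "k \<in> {1..N}")
      case True
      then show ?thesis using F2[OF Q True] unfolding \<Psi>_def by simp
    next
      case False
      have "Q k = undefined" using Q False unfolding PP_def by (auto simp: PiE_def extensional_def)
      then show ?thesis using False unfolding \<Psi>_def by auto
    qed
  qed
  have bij: "bij_betw \<Psi> SS PP"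
    by (rule bij_betw_byWitness[where f'=\<Psi>']) (use F1 F3 F4 F5 in auto)
  have "card SS = card PP" using bij_betw_same_card[OF bij] .
  also have "\<dots> = (\<Prod>k\<in>{1..N}. card {Q. Q \<subseteq> cycset k B \<sigma> \<and> card Q = t k})"
    unfolding PP_def by (simp add: card_PiE)
  also have "\<dots> = (\<Prod>k\<in>{1..N}. cnt k B \<sigma> choose t k)"
    unfolding cnt_def using cycset_fin[OF fB] by (simp add: n_subsets)
  finally show ?thesis unfolding SS_def .
qed

lemma Sym_perm: "\<tau> \<in> Sym c \<Longrightarrow> \<tau> i permutes {..<c i}"
  unfolding Sym_def by simp

lemma Sym_id: "(\<lambda>i. id) \<in> Sym c"
  unfolding Sym_def by (simp add: permutes_id)

lemma perm_of_permutes: "p permutes {..<(n::nat)} \<Longrightarrow> permutation p"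
  unfolding permutation_permutes by (intro exI[of _ "{..<n}"]) simp

lemma stab_permutes:
  assumes "p permutes {..<(n::nat)}" shows "stab p {..<n}"
  unfolding stab_def
proof
  fix x assume "x \<in> {..<n}"
  then show "p x \<in> {..<n}" using permutes_in_image[OF assms] by simp
qed

lemma conj_class_elem:
  assumes "\<psi> \<in> conj_class c \<rho>"
  obtains \<tau> where "\<tau> \<in> Sym c" "\<psi> = (\<lambda>i. \<tau> i \<circ> \<rho> i \<circ> inv (\<tau> i))"
  using assms unfolding conj_class_def by blast

lemma conj_perm_cnt:
  assumes r: "\<rho> \<in> Sym c" and psi: "\<psi> \<in> conj_class c \<rho>"
  shows "\<psi> i permutes {..<c i} \<and> cnt k {..<c i} (\<psi> i) = cnt k {..<c i} (\<rho> i)"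
proof -
  obtain \<tau> where t: "\<tau> \<in> Sym c" "\<psi> = (\<lambda>i. \<tau> i \<circ> \<rho> i \<circ> inv (\<tau> i))"
    using conj_class_elem[OF psi] by blast
  have tp: "\<tau> i permutes {..<c i}" using Sym_perm[OF t(1)] .
  have rp: "\<rho> i permutes {..<c i}" using Sym_perm[OF r] .
  have a: "\<tau> i \<circ> \<rho> i permutes {..<c i}" by (rule permutes_compose[OF rp tp])
  have pp: "\<psi> i permutes {..<c i}"
    unfolding t(2) by (rule permutes_compose[OF permutes_inv[OF tp] a])
  have eq: "\<forall>z\<in>{..<c i}. \<psi> i (\<tau> i z) = \<tau> i (\<rho> i z)"
    unfolding t(2) using permutes_inj[OF tp] by (simp add: inv_f_f)
  have "cnt k (\<tau> i ` {..<c i}) (\<psi> i) = cnt k {..<c i} (\<rho> i)"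
    by (rule cnt_invariant[OF _ stab_permutes[OF rp] _ eq]) (auto intro: inj_on_subset[OF permutes_inj[OF tp]])
  then show ?thesis using pp permutes_image[OF tp] by simp
qed

lemma class_img:
  assumes f: "f \<in> Inj c d"
  shows "(\<Union>g\<in>inj_class c f. g i ` {..<c i}) = f i ` {..<c i}"
proof -
  have "f \<in> inj_class c f" unfolding inj_class_def using Sym_id[of c]
    by (intro CollectI exI[of _ "\<lambda>i. id"]) simp
  moreover have "g i ` {..<c i} = f i ` {..<c i}" if gi: "g \<in> inj_class c f" for g
  proof -
    obtain \<tau> where t: "\<tau> \<in> Sym c" "g = (\<lambda>i. f i \<circ> \<tau> i)" using gi unfolding inj_class_def by blast
    have e: "\<tau> i ` {..<c i} = {..<c i}" using permutes_image[OF Sym_perm[OF t(1)]] .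
    have "g i ` {..<c i} = f i ` (\<tau> i ` {..<c i})" using t(2) by (simp add: image_image)
    then show ?thesis using e by simp
  qed
  ultimately show ?thesis
  proof (intro set_eqI iffI)
    fix z assume "z \<in> (\<Union>g\<in>inj_class c f. g i ` {..<c i})"
    then obtain g where "g \<in> inj_class c f" "z \<in> g i ` {..<c i}" by (rule UN_E)
    then show "z \<in> f i ` {..<c i}" using \<open>\<And>g. g \<in> inj_class c f \<Longrightarrow> g i ` {..<c i} = f i ` {..<c i}\<close> by simp
  next
    fix z assume "z \<in> f i ` {..<c i}"
    then show "z \<in> (\<Union>g\<in>inj_class c f. g i ` {..<c i})" using \<open>f \<in> inj_class c f\<close> by (rule UN_I[rotated])
  qed
qed

lemma class_mem_eq:
  assumes g: "g \<in> inj_class c f"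
  shows "inj_class c g = inj_class c f"
proof -
  obtain \<tau> where t: "\<tau> \<in> Sym c" "g = (\<lambda>i. f i \<circ> \<tau> i)" using g unfolding inj_class_def by blast
  have tp: "\<tau> i permutes {..<c i}" for i using Sym_perm[OF t(1)] .
  show ?thesis
  proof (intro set_eqI iffI)
    fix h assume "h \<in> inj_class c g"
    then obtain \<tau>' where t': "\<tau>' \<in> Sym c" "h = (\<lambda>i. g i \<circ> \<tau>' i)" unfolding inj_class_def by blast
    have A: "(\<lambda>i. \<tau> i \<circ> \<tau>' i) \<in> Sym c" unfolding Sym_def using tp Sym_perm[OF t'(1)]
      by (simp add: permutes_compose)
    have B: "h = (\<lambda>i. f i \<circ> (\<tau> i \<circ> \<tau>' i))" using t t' by (simp add: comp_assoc)
    show "h \<in> inj_class c f" unfolding inj_class_def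
      by (rule CollectI, rule exI[where x="\<lambda>i. \<tau> i \<circ> \<tau>' i"]) (use A B in simp)
  next
    fix h assume "h \<in> inj_class c f"
    then obtain \<tau>' where t': "\<tau>' \<in> Sym c" "h = (\<lambda>i. f i \<circ> \<tau>' i)" unfolding inj_class_def by blast
    have A: "(\<lambda>i. inv (\<tau> i) \<circ> \<tau>' i) \<in> Sym c" unfolding Sym_def using tp Sym_perm[OF t'(1)]
      by (simp add: permutes_compose permutes_inv)
    have B: "h = (\<lambda>i. g i \<circ> (inv (\<tau> i) \<circ> \<tau>' i))"
    proof -
      have "f i \<circ> \<tau>' i = (f i \<circ> \<tau> i) \<circ> (inv (\<tau> i) \<circ> \<tau>' i)" for i
        by (simp add: fun_eq_iff surj_f_inv_f[OF permutes_surj[OF tp]])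
      then show ?thesis using t t' by simp
    qed
    show "h \<in> inj_class c g" unfolding inj_class_def
      by (rule CollectI, rule exI[where x="\<lambda>i. inv (\<tau> i) \<circ> \<tau>' i"]) (use A B in simp)
  qed
qed

lemma same_img_class:
  assumes f: "f \<in> Inj c d" and g: "g \<in> Inj c d"
    and im: "\<forall>i. f i ` {..<c i} = g i ` {..<c i}"
  shows "g \<in> inj_class c f"
proof -
  define \<tau> where "\<tau> i x = (if x < c i then the_inv_into {..<c i} (f i) (g i x) else x)" for i x
  have fi: "inj_on (f i) {..<c i}" "inj_on (g i) {..<c i}" for i using f g unfolding Inj_def by auto
  have tin: "\<tau> i x \<in> {..<c i} \<and> f i (\<tau> i x) = g i x" if "x < c i" for i x
  proof -
    have gx: "g i x \<in> f i ` {..<c i}" using im that by blast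
    have "the_inv_into {..<c i} (f i) (g i x) \<in> {..<c i}"
      by (rule the_inv_into_into[OF fi(1) gx]) simp
    moreover have "f i (the_inv_into {..<c i} (f i) (g i x)) = g i x"
      by (rule f_the_inv_into_f[OF fi(1) gx])
    ultimately show ?thesis unfolding \<tau>_def using that by simp
  qed
  have tp: "\<tau> i permutes {..<c i}" for i
  proof -
    have inj: "inj_on (\<tau> i) {..<c i}"
    proof (rule inj_onI)
      fix x y assume "x \<in> {..<c i}" "y \<in> {..<c i}" "\<tau> i x = \<tau> i y"
      then have "g i x = g i y" using tin by (metis lessThan_iff)
      then show "x = y" using inj_onD[OF fi(2)[of i]] \<open>x \<in> _\<close> \<open>y \<in> _\<close> by blast
    qed
    have "\<tau> i ` {..<c i} \<subseteq> {..<c i}" using tin by auto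
    then have "bij_betw (\<tau> i) {..<c i} {..<c i}"
      using inj endo_inj_surj[of "{..<c i}" "\<tau> i"] by (simp add: bij_betw_def)
    then show ?thesis by (rule bij_imp_permutes) (simp add: \<tau>_def)
  qed
  have "g = (\<lambda>i. f i \<circ> \<tau> i)"
  proof (intro ext)
    fix i x
    show "g i x = (f i \<circ> \<tau> i) x"
    proof (cases "x < c i")
      case True then show ?thesis using tin by simp
    next
      case False
      have "g i x = undefined" using g False unfolding Inj_def PiE_def extensional_def by auto
      moreover have "f i x = undefined" using f False unfolding Inj_def PiE_def extensional_def by auto
      ultimately show ?thesis using False by (simp add: \<tau>_def)
    qed
  qed
  moreover have "\<tau> \<in> Sym c" unfolding Sym_def using tp by simp
  ultimately show ?thesis unfolding inj_class_def by (intro CollectI exI[where x=\<tau>]) simp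
qed

lemma Inj_img: "f \<in> Inj c d \<Longrightarrow> f i ` {..<c i} \<subseteq> {..<d i}"
  unfolding Inj_def by (auto simp: PiE_def Pi_def)

lemma Inj_inj: "f \<in> Inj c d \<Longrightarrow> inj_on (f i) {..<c i}"
  unfolding Inj_def by simp

lemma valid_img:
  assumes f: "f \<in> Inj c d" and r: "\<rho> \<in> Sym c" and psi: "\<psi> \<in> conj_class c \<rho>"
    and cond: "\<forall>i. \<forall>x<c i. \<sigma> i (f i x) = f i (\<psi> i x)"
  shows "f i ` {..<c i} \<subseteq> {..<d i} \<and> stab (\<sigma> i) (f i ` {..<c i})
     \<and> (\<forall>k. cnt k (f i ` {..<c i}) (\<sigma> i) = cnt k {..<c i} (\<rho> i))"
proof -
  have pp: "\<psi> i permutes {..<c i}" using conj_perm_cnt[OF r psi] by blast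
  have st: "stab (\<psi> i) {..<c i}" by (rule stab_permutes[OF pp])
  have eq: "\<forall>z\<in>{..<c i}. \<sigma> i (f i z) = f i (\<psi> i z)" using cond by simp
  have s2: "stab (\<sigma> i) (f i ` {..<c i})" unfolding stab_def
  proof
    fix z assume "z \<in> f i ` {..<c i}"
    then obtain x where x: "x \<in> {..<c i}" "z = f i x" by blast
    have "\<psi> i x \<in> {..<c i}" using st x(1) unfolding stab_def by blast
    then show "\<sigma> i z \<in> f i ` {..<c i}" using eq x by simp
  qed
  have "cnt k (f i ` {..<c i}) (\<sigma> i) = cnt k {..<c i} (\<psi> i)" for k
    by (rule cnt_invariant[OF _ st Inj_inj[OF f] eq]) simp
  also have "\<dots> k = cnt k {..<c i} (\<rho> i)" for k using conj_perm_cnt[OF r psi] by blast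
  finally show ?thesis using Inj_img[OF f] s2 by simp
qed

lemma good_bij:
  assumes c: "c \<in> obj m" and r: "\<rho> \<in> Sym c" and d: "d \<in> obj m" and s: "\<sigma> \<in> Sym d"
  shows "bij_betw (\<lambda>K. (\<lambda>i\<in>{..<m}. \<Union>f\<in>K. f i ` {..<c i}))
     {K. \<exists>f\<in>Inj c d. K = inj_class c f \<and> (\<exists>\<psi>\<in>conj_class c \<rho>. \<forall>i. \<forall>x<c i. \<sigma> i (f i x) = f i (\<psi> i x))}
     (PiE {..<m} (\<lambda>i. {S. S \<subseteq> {..<d i} \<and> stab (\<sigma> i) S \<and> (\<forall>k. cnt k S (\<sigma> i) = cnt k {..<c i} (\<rho> i))}))"
  (is "bij_betw ?\<Phi> ?G ?P")
proof (rule bij_betw_imageI)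
  have c0: "c i = 0" if "i \<ge> m" for i using c that unfolding obj_def by simp
  have Phi_cls: "?\<Phi> (inj_class c f) = (\<lambda>i\<in>{..<m}. f i ` {..<c i})" if "f \<in> Inj c d" for f
    using class_img[OF that] by simp
  show "inj_on ?\<Phi> ?G"
  proof (rule inj_onI)
    fix K1 K2 assume K1: "K1 \<in> ?G" and K2: "K2 \<in> ?G" and e: "?\<Phi> K1 = ?\<Phi> K2"
    obtain f1 where f1: "f1 \<in> Inj c d" "K1 = inj_class c f1" using K1 by blast
    obtain f2 where f2: "f2 \<in> Inj c d" "K2 = inj_class c f2" using K2 by blast
    have im: "\<forall>i. f1 i ` {..<c i} = f2 i ` {..<c i}"
    proof
      fix i show "f1 i ` {..<c i} = f2 i ` {..<c i}"
      proof (cases "i < m")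
        case True
        have "?\<Phi> K1 i = ?\<Phi> K2 i" using e by simp
        then show ?thesis using Phi_cls[OF f1(1)] Phi_cls[OF f2(1)] f1(2) f2(2) True by simp
      next
        case False then show ?thesis using c0 by simp
      qed
    qed
    have "f2 \<in> inj_class c f1" by (rule same_img_class[OF f1(1) f2(1) im])
    then show "K1 = K2" using class_mem_eq f1(2) f2(2) by simp
  qed
  show "?\<Phi> ` ?G = ?P"
  proof (intro set_eqI iffI)
    fix S assume "S \<in> ?\<Phi> ` ?G"
    then obtain K where K: "K \<in> ?G" "S = ?\<Phi> K" by blast
    obtain f \<psi> where f: "f \<in> Inj c d" "K = inj_class c f" "\<psi> \<in> conj_class c \<rho>"
      "\<forall>i. \<forall>x<c i. \<sigma> i (f i x) = f i (\<psi> i x)" using K(1) by blast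
    have S: "S = (\<lambda>i\<in>{..<m}. f i ` {..<c i})" using K(2) f(2) Phi_cls[OF f(1)] by simp
    show "S \<in> ?P" unfolding S using valid_img[OF f(1) r f(3) f(4)] by simp
  next
    fix S assume S: "S \<in> ?P"
    have ex: "\<exists>h. bij_betw h {..<c i} (S i) \<and> (\<forall>z\<in>{..<c i}. \<sigma> i (h z) = h (\<rho> i z))"
      if i: "i \<in> {..<m}" for i
    proof -
      have Si: "S i \<subseteq> {..<d i}" "stab (\<sigma> i) (S i)" "\<forall>k. cnt k (S i) (\<sigma> i) = cnt k {..<c i} (\<rho> i)"
        using PiE_mem[OF S i] by auto
      have rp: "\<rho> i permutes {..<c i}" using Sym_perm[OF r] .
      have sp: "\<sigma> i permutes {..<d i}" using Sym_perm[OF s] .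
      show ?thesis
        by (rule cyc_iso[OF perm_of_permutes[OF rp] perm_of_permutes[OF sp] _ stab_permutes[OF rp]
            finite_subset[OF Si(1)] Si(2)]) (use Si(3) in simp_all)
    qed
    then have ex': "\<forall>i\<in>{..<m}. \<exists>h. bij_betw h {..<c i} (S i) \<and> (\<forall>z\<in>{..<c i}. \<sigma> i (h z) = h (\<rho> i z))"
      by blast
    obtain H where H: "\<forall>i\<in>{..<m}. bij_betw (H i) {..<c i} (S i) \<and> (\<forall>z\<in>{..<c i}. \<sigma> i (H i z) = H i (\<rho> i z))"
      using bchoice[OF ex'] by blast
    define f where "f i = restrict (H i) {..<c i}" for i
    have f_in: "f \<in> Inj c d" unfolding Inj_def
    proof (intro CollectI allI conjI)
      fix i
      show "f i \<in> {..<c i} \<rightarrow>\<^sub>E {..<d i}"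
      proof (cases "i < m")
        case True
        have "H i ` {..<c i} = S i" using H True by (simp add: bij_betw_def)
        moreover have "S i \<subseteq> {..<d i}" using PiE_mem[OF S] True by auto
        ultimately show ?thesis unfolding f_def by (auto simp: PiE_def Pi_def)
      next
        case False
        then have "c i = 0" using c0 by simp
        then have "f i = (\<lambda>x. undefined)" unfolding f_def restrict_def by simp
        then show ?thesis using \<open>c i = 0\<close> by simp
      qed
      show "inj_on (f i) {..<c i}"
      proof (cases "i < m")
        case True
        then have "inj_on (H i) {..<c i}" using H by (simp add: bij_betw_def)
        then show ?thesis unfolding f_def by (simp add: inj_on_def)
      next
        case False then show ?thesis using c0 by simp
      qed
    qed
    have rho_in: "\<rho> \<in> conj_class c \<rho>" unfolding conj_class_def
      by (rule CollectI, rule bexI[where x="\<lambda>i. id"]) (simp_all add: Sym_id)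
    have cond: "\<forall>i. \<forall>x<c i. \<sigma> i (f i x) = f i (\<rho> i x)"
    proof (intro allI impI)
      fix i x assume x: "x < c i"
      then have im: "i < m" using c0 by (metis not_less not_less0)
      have "\<rho> i x \<in> {..<c i}" using permutes_in_image[OF Sym_perm[OF r, of i]] x by simp
      then have "\<rho> i x < c i" by simp
      then show "\<sigma> i (f i x) = f i (\<rho> i x)" using H im x unfolding f_def by simp
    qed
    have G: "inj_class c f \<in> ?G"
      by (rule CollectI, rule bexI[where x=f]) (use rho_in cond f_in in \<open>auto intro!: bexI[where x=\<rho>]\<close>)
    have eqS: "?\<Phi> (inj_class c f) = S"
    proof
      fix i
      show "?\<Phi> (inj_class c f) i = S i"
      proof (cases "i < m")
        case True
        have "H i ` {..<c i} = S i" using H True by (simp add: bij_betw_def)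
        then have "f i ` {..<c i} = S i" unfolding f_def by simp
        then show ?thesis using Phi_cls[OF f_in] True by simp
      next
        case False
        then have "S i = undefined" using S by (simp add: PiE_def extensional_def)
        then show ?thesis using False by simp
      qed
    qed
    show "S \<in> ?\<Phi> ` ?G" by (rule image_eqI[where f="?\<Phi>", OF eqS[symmetric] G])
  qed
qed
lemma binomX_prod:
  assumes c: "c \<in> obj m" and r: "\<rho> \<in> Sym c" and d: "d \<in> obj m" and s: "\<sigma> \<in> Sym d"
    and N: "\<forall>i<m. c i \<le> N \<and> d i \<le> N"
  shows "binomX c (conj_class c \<rho>) (d, \<sigma>) =
    of_nat (\<Prod>i<m. \<Prod>k\<in>{1..N}. num_cycles k (d i) (\<sigma> i) choose num_cycles k (c i) (\<rho> i))"
proof -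
  let ?G = "{K. \<exists>f\<in>Inj c d. K = inj_class c f \<and> (\<exists>\<psi>\<in>conj_class c \<rho>. \<forall>i. \<forall>x<c i. \<sigma> i (f i x) = f i (\<psi> i x))}"
  let ?S = "\<lambda>i. {S. S \<subseteq> {..<d i} \<and> stab (\<sigma> i) S \<and> (\<forall>k. cnt k S (\<sigma> i) = cnt k {..<c i} (\<rho> i))}"
  have "card ?G = card (PiE {..<m} ?S)" using bij_betw_same_card[OF good_bij[OF c r d s]] .
  also have "\<dots> = (\<Prod>i<m. card (?S i))" by (simp add: card_PiE)
  also have "\<dots> = (\<Prod>i<m. \<Prod>k\<in>{1..N}. num_cycles k (d i) (\<sigma> i) choose num_cycles k (c i) (\<rho> i))"
  proof (rule prod.cong[OF refl])
    fix i assume i: "i \<in> {..<m}"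
    have rp: "\<rho> i permutes {..<c i}" using Sym_perm[OF r] .
    have sp: "\<sigma> i permutes {..<d i}" using Sym_perm[OF s] .
    have Ni: "c i \<le> N" "d i \<le> N" using N i by auto
    have t: "\<forall>k. cnt k {..<c i} (\<rho> i) \<noteq> 0 \<longrightarrow> 1 \<le> k \<and> k \<le> N"
    proof (intro allI impI)
      fix k assume k: "cnt k {..<c i} (\<rho> i) \<noteq> 0"
      have "\<not> (k = 0 \<or> card {..<c i} < k)"
      proof
        assume "k = 0 \<or> card {..<c i} < k"
        then have "cnt k {..<c i} (\<rho> i) = 0"
          by (rule cnt_zero[OF perm_of_permutes[OF rp] finite_lessThan stab_permutes[OF rp]])
        then show False using k by simp
      qed
      then show "1 \<le> k \<and> k \<le> N" using Ni by simp
    qed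
    have "card (?S i) = (\<Prod>k\<in>{1..N}. cnt k {..<d i} (\<sigma> i) choose cnt k {..<c i} (\<rho> i))"
      by (rule count_sets[OF perm_of_permutes[OF sp] finite_lessThan stab_permutes[OF sp] _ t])
        (simp add: Ni)
    then show "card (?S i) = (\<Prod>k\<in>{1..N}. num_cycles k (d i) (\<sigma> i) choose num_cycles k (c i) (\<rho> i))"
      by (simp add: num_cycles_cnt)
  qed
  finally show ?thesis unfolding binomX_def by simp
qed

lemma sp_gen: "f \<in> A \<Longrightarrow> f \<in> cspan_on D A"
  unfolding cspan_on_def by (rule CollectI, rule exI[of _ "{f}"], rule exI[of _ "\<lambda>_. 1"]) simp

lemma sp_zero: "(\<lambda>p. 0) \<in> cspan_on D A"
  unfolding cspan_on_def by (rule CollectI, rule exI[of _ "{}"], rule exI[of _ "\<lambda>_. 1"]) simp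

lemma sp_intro: "finite F \<Longrightarrow> F \<subseteq> A \<Longrightarrow> (\<forall>p\<in>D. g p = (\<Sum>f\<in>F. c f * f p)) \<Longrightarrow> g \<in> cspan_on D A"
  unfolding cspan_on_def by (rule CollectI, rule exI[of _ F], rule exI[of _ c]) simp

lemma sp_elim:
  assumes "g \<in> cspan_on D A"
  obtains F c where "finite F" "F \<subseteq> A" "\<forall>p\<in>D. g p = (\<Sum>f\<in>F. c f * f p)"
  using assms unfolding cspan_on_def by blast

lemma sp_cong: "f \<in> cspan_on D A \<Longrightarrow> (\<forall>p\<in>D. g p = f p) \<Longrightarrow> g \<in> cspan_on D A"
proof -
  assume f: "f \<in> cspan_on D A" and e: "\<forall>p\<in>D. g p = f p"
  obtain F c where F: "finite F" "F \<subseteq> A" "\<forall>p\<in>D. f p = (\<Sum>f\<in>F. c f * f p)" using sp_elim[OF f] .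
  show ?thesis by (rule sp_intro[OF F(1,2), where c=c]) (use e F(3) in simp)
qed

lemma sp_scale: "f \<in> cspan_on D A \<Longrightarrow> (\<lambda>p. a * f p) \<in> cspan_on D A"
proof -
  assume "f \<in> cspan_on D A"
  then obtain F c where F: "finite F" "F \<subseteq> A" "\<forall>p\<in>D. f p = (\<Sum>g\<in>F. c g * g p)"
    by (rule sp_elim)
  have "\<forall>p\<in>D. a * f p = (\<Sum>g\<in>F. (a * c g) * g p)"
    using F(3) by (simp add: sum_distrib_left mult.assoc)
  then show ?thesis by (rule sp_intro[OF F(1,2)])
qed

lemma sum_restr:
  assumes "finite F" "F1 \<subseteq> F"
  shows "(\<Sum>g\<in>F. (if g \<in> F1 then c g else 0) * g p) = (\<Sum>g\<in>F1. c g * (g p :: complex))"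
proof -
  have "(\<Sum>g\<in>F. (if g \<in> F1 then c g else 0) * g p) = (\<Sum>g\<in>F1. (if g \<in> F1 then c g else 0) * g p)"
    by (rule sum.mono_neutral_right[OF assms]) auto
  also have "\<dots> = (\<Sum>g\<in>F1. c g * g p)" by (rule sum.cong) auto
  finally show ?thesis .
qed

lemma sp_add: "f \<in> cspan_on D A \<Longrightarrow> g \<in> cspan_on D A \<Longrightarrow> (\<lambda>p. f p + g p) \<in> cspan_on D A"
proof -
  assume "f \<in> cspan_on D A" "g \<in> cspan_on D A"
  note fg = this
  obtain F1 c1 where F1: "finite F1" "F1 \<subseteq> A" "\<forall>p\<in>D. f p = (\<Sum>h\<in>F1. c1 h * h p)"
    using sp_elim[OF fg(1)] by blast
  obtain F2 c2 where F2: "finite F2" "F2 \<subseteq> A" "\<forall>p\<in>D. g p = (\<Sum>h\<in>F2. c2 h * h p)"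
    using sp_elim[OF fg(2)] by blast
  define c where "c h = (if h \<in> F1 then c1 h else 0) + (if h \<in> F2 then c2 h else 0)" for h
  have fin: "finite (F1 \<union> F2)" using F1 F2 by simp
  have eqs: "\<forall>p\<in>D. f p + g p = (\<Sum>h\<in>F1 \<union> F2. c h * h p)"
  proof
    fix p assume p: "p \<in> D"
    have "(\<Sum>h\<in>F1 \<union> F2. c h * h p) = (\<Sum>h\<in>F1 \<union> F2. (if h \<in> F1 then c1 h else 0) * h p)
        + (\<Sum>h\<in>F1 \<union> F2. (if h \<in> F2 then c2 h else 0) * h p)"
      unfolding c_def by (simp add: distrib_right sum.distrib)
    also have "\<dots> = (\<Sum>h\<in>F1. c1 h * h p) + (\<Sum>h\<in>F2. c2 h * h p)"
      using sum_restr[OF fin, of F1 c1 p] sum_restr[OF fin, of F2 c2 p] by simp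
    finally show "f p + g p = (\<Sum>h\<in>F1 \<union> F2. c h * h p)" using F1(3) F2(3) p by simp
  qed
  show ?thesis by (rule sp_intro[OF fin _ eqs]) (use F1(2) F2(2) in simp)
qed

lemma sp_sum:
  assumes "finite I"
  shows "(\<forall>j\<in>I. g j \<in> cspan_on D A) \<Longrightarrow> (\<lambda>p. \<Sum>j\<in>I. c j * g j p) \<in> cspan_on D A"
  using assms
proof (induct I rule: finite_induct)
  case empty then show ?case by (simp add: sp_zero)
next
  case (insert j I)
  have a: "(\<lambda>p. c j * g j p) \<in> cspan_on D A" using insert by (simp add: sp_scale)
  have b: "(\<lambda>p. \<Sum>j\<in>I. c j * g j p) \<in> cspan_on D A" using insert by simp
  show ?case using sp_add[OF a b] insert(1,2) by simp
qed

lemma sp_trans: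
  assumes "A \<subseteq> cspan_on D B"
  shows "cspan_on D A \<subseteq> cspan_on D B"
proof
  fix f assume "f \<in> cspan_on D A"
  then obtain F c where F: "finite F" "F \<subseteq> A" "\<forall>p\<in>D. f p = (\<Sum>g\<in>F. c g * g p)"
    by (rule sp_elim)
  have "\<forall>g\<in>F. g \<in> cspan_on D B" using F(2) assms by (simp add: subset_iff)
  then have "(\<lambda>p. \<Sum>g\<in>F. c g * g p) \<in> cspan_on D B"
    by (rule sp_sum[OF F(1)])
  then show "f \<in> cspan_on D B" using F(3) by (rule sp_cong)
qed

lemma sp_mono: "A \<subseteq> B \<Longrightarrow> cspan_on D A \<subseteq> cspan_on D B"
proof (rule sp_trans)
  assume "A \<subseteq> B"
  show "A \<subseteq> cspan_on D B"
  proof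
    fix f assume "f \<in> A"
    then have "f \<in> B" using \<open>A \<subseteq> B\<close> by (simp add: subset_iff)
    then show "f \<in> cspan_on D B" by (rule sp_gen)
  qed
qed

definition Xn :: "nat \<Rightarrow> nat \<Rightarrow> (nat \<Rightarrow> nat) \<times> (nat \<Rightarrow> nat \<Rightarrow> nat) \<Rightarrow> nat" where
  "Xn k i p = num_cycles k (fst p i) (snd p i)"

lemma Xfun_Xn: "Xfun k i p = of_nat (Xn k i p)"
  by (cases p) (simp add: Xfun_def Xn_def)

definition supp :: "(nat \<Rightarrow> nat \<Rightarrow> nat) \<Rightarrow> (nat \<times> nat) set" where
  "supp a = {(k, i). a k i \<noteq> 0}"

definition Pt :: "(nat \<Rightarrow> nat \<Rightarrow> nat) \<Rightarrow> (nat \<Rightarrow> nat) \<times> (nat \<Rightarrow> nat \<Rightarrow> nat) \<Rightarrow> complex" where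
  "Pt t p = (\<Prod>v\<in>supp t. of_nat (Xn (fst v) (snd v) p choose t (fst v) (snd v)))"

lemma mono_fun_alt: "mono_fun a p = (\<Prod>v\<in>supp a. of_nat (Xn (fst v) (snd v) p) ^ a (fst v) (snd v))"
  unfolding mono_fun_def supp_def by (simp add: Xfun_Xn)

lemma supp_fin: "a \<in> monomials m \<Longrightarrow> finite (supp a)"
  unfolding monomials_def supp_def by simp

lemma supp_mem: "v \<in> supp a \<longleftrightarrow> a (fst v) (snd v) \<noteq> 0"
  unfolding supp_def by (cases v) simp

lemma mono_ext:
  assumes "finite T" "supp a \<subseteq> T"
  shows "mono_fun a p = (\<Prod>v\<in>T. of_nat (Xn (fst v) (snd v) p) ^ a (fst v) (snd v))"
  unfolding mono_fun_alt
  by (rule prod.mono_neutral_left[OF assms]) (simp add: supp_mem)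

lemma Pt_ext:
  assumes "finite T" "supp a \<subseteq> T"
  shows "Pt a p = (\<Prod>v\<in>T. of_nat (Xn (fst v) (snd v) p choose a (fst v) (snd v)))"
  unfolding Pt_def
  by (rule prod.mono_neutral_left[OF assms]) (simp add: supp_mem)

lemma deg_fin: "a \<in> monomials m \<Longrightarrow> finite {k. a k i \<noteq> 0}"
proof -
  assume a: "a \<in> monomials m"
  have "{k. a k i \<noteq> 0} \<subseteq> fst ` supp a" unfolding supp_def by (auto intro: image_eqI[where x="(k, i)" for k])
  then show ?thesis using supp_fin[OF a] finite_subset by blast
qed

lemma deg_ext:
  assumes "finite K" "{k. a k i \<noteq> 0} \<subseteq> K"
  shows "mono_deg a i = (\<Sum>k\<in>K. k * a k i)"
  unfolding mono_deg_def
  by (rule sum.mono_neutral_left[OF assms]) simp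

definition add1 :: "(nat \<Rightarrow> nat \<Rightarrow> nat) \<Rightarrow> nat \<Rightarrow> nat \<Rightarrow> nat \<Rightarrow> nat \<Rightarrow> nat" where
  "add1 a k0 i0 = (\<lambda>k i. a k i + (if k = k0 \<and> i = i0 then 1 else 0))"

lemma supp_add1: "supp (add1 a k0 i0) = insert (k0, i0) (supp a)"
  unfolding supp_def add1_def by auto

lemma add1_mono:
  assumes a: "a \<in> monomials m" and k0: "1 \<le> k0" and i0: "i0 < m"
  shows "add1 a k0 i0 \<in> monomials m"
proof -
  have "finite {(k, i). add1 a k0 i0 k i \<noteq> 0}" using supp_add1[of a k0 i0] supp_fin[OF a]
    unfolding supp_def by simp
  moreover have "\<forall>k i. add1 a k0 i0 k i \<noteq> 0 \<longrightarrow> 1 \<le> k \<and> i < m"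
    using a k0 i0 unfolding monomials_def add1_def by auto
  ultimately show ?thesis unfolding monomials_def by simp
qed

lemma add1_fun:
  assumes a: "a \<in> monomials m"
  shows "mono_fun (add1 a k0 i0) p = of_nat (Xn k0 i0 p) * mono_fun a p"
proof -
  let ?T = "insert (k0, i0) (supp a)"
  let ?g = "\<lambda>b v. (of_nat (Xn (fst v) (snd v) p) :: complex) ^ b (fst v) (snd v)"
  have fT: "finite ?T" using supp_fin[OF a] by simp
  have e1: "mono_fun (add1 a k0 i0) p = prod (?g (add1 a k0 i0)) ?T"
    by (rule mono_ext[OF fT]) (simp add: supp_add1)
  have e2: "mono_fun a p = prod (?g a) ?T"
    by (rule mono_ext[OF fT]) auto
  have r1: "prod (?g (add1 a k0 i0)) ?T = ?g (add1 a k0 i0) (k0, i0) * prod (?g (add1 a k0 i0)) (?T - {(k0, i0)})"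
    by (rule prod.remove[OF fT]) simp
  have r2: "prod (?g a) ?T = ?g a (k0, i0) * prod (?g a) (?T - {(k0, i0)})"
    by (rule prod.remove[OF fT]) simp
  have r3: "prod (?g (add1 a k0 i0)) (?T - {(k0, i0)}) = prod (?g a) (?T - {(k0, i0)})"
    by (rule prod.cong[OF refl]) (auto simp: add1_def)
  have r4: "?g (add1 a k0 i0) (k0, i0) = of_nat (Xn k0 i0 p) * ?g a (k0, i0)"
    by (simp add: add1_def)
  show ?thesis using e1 e2 r1 r2 r3 r4 by (simp add: mult.assoc)
qed

lemma add1_deg:
  assumes a: "a \<in> monomials m"
  shows "mono_deg (add1 a k0 i0) i = mono_deg a i + (if i = i0 then k0 else 0)"
proof -
  let ?K = "insert k0 {k. a k i \<noteq> 0}"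
  have fK: "finite ?K" using deg_fin[OF a] by simp
  have e1: "mono_deg (add1 a k0 i0) i = (\<Sum>k\<in>?K. k * add1 a k0 i0 k i)"
    by (rule deg_ext[OF fK]) (auto simp: add1_def split: if_splits)
  have e2: "mono_deg a i = (\<Sum>k\<in>?K. k * a k i)"
    by (rule deg_ext[OF fK]) auto
  have "(\<Sum>k\<in>?K. k * add1 a k0 i0 k i) = (\<Sum>k\<in>?K. k * a k i + (if k = k0 then (if i = i0 then k0 else 0) else 0))"
    by (rule sum.cong) (auto simp: add1_def)
  also have "\<dots> = (\<Sum>k\<in>?K. k * a k i) + (\<Sum>k\<in>?K. if k = k0 then (if i = i0 then k0 else 0) else 0)"
    by (rule sum.distrib)
  also have "(\<Sum>k\<in>?K. if k = k0 then (if i = i0 then k0 else 0) else 0) = (if i = i0 then k0 else 0)"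
    using fK by (simp add: sum.delta)
  finally show ?thesis using e1 e2 by simp
qed

lemma choose_rec_c:
  "(of_nat (Suc r) :: complex) * of_nat (x choose Suc r) = (of_nat x - of_nat r) * of_nat (x choose r)"
proof (cases "r \<le> x")
  case True
  have "Suc r * (x choose Suc r) = (x - r) * (x choose r)"
    using binomial_absorption[of r x] binomial_absorb_comp[of x r] by simp
  then have "(of_nat (Suc r * (x choose Suc r)) :: complex) = of_nat ((x - r) * (x choose r))" by simp
  then show ?thesis using True by (simp add: of_nat_diff distrib_right)
next
  case False
  then show ?thesis by (simp add: binomial_eq_0)
qed

lemma Pt_step:
  assumes t: "t \<in> monomials m"
  shows "of_nat (Suc (t k0 i0)) * Pt (add1 t k0 i0) p = (of_nat (Xn k0 i0 p) - of_nat (t k0 i0)) * Pt t p"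
proof -
  let ?T = "insert (k0, i0) (supp t)"
  let ?g = "\<lambda>b v. (of_nat (Xn (fst v) (snd v) p choose b (fst v) (snd v)) :: complex)"
  have fT: "finite ?T" using supp_fin[OF t] by simp
  have e1: "Pt (add1 t k0 i0) p = prod (?g (add1 t k0 i0)) ?T"
    by (rule Pt_ext[OF fT]) (simp add: supp_add1)
  have e2: "Pt t p = prod (?g t) ?T"
    by (rule Pt_ext[OF fT]) auto
  have r1: "prod (?g (add1 t k0 i0)) ?T = ?g (add1 t k0 i0) (k0, i0) * prod (?g (add1 t k0 i0)) (?T - {(k0, i0)})"
    by (rule prod.remove[OF fT]) simp
  have r2: "prod (?g t) ?T = ?g t (k0, i0) * prod (?g t) (?T - {(k0, i0)})"
    by (rule prod.remove[OF fT]) simp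
  have r3: "prod (?g (add1 t k0 i0)) (?T - {(k0, i0)}) = prod (?g t) (?T - {(k0, i0)})"
    by (rule prod.cong[OF refl]) (auto simp: add1_def)
  have r4: "of_nat (Suc (t k0 i0)) * ?g (add1 t k0 i0) (k0, i0) = (of_nat (Xn k0 i0 p) - of_nat (t k0 i0)) * ?g t (k0, i0)"
    using choose_rec_c[of "t k0 i0" "Xn k0 i0 p"] by (simp add: add1_def)
  show ?thesis using e1 e2 r1 r2 r3 r4 by (simp add: mult.assoc[symmetric])
qed

definition msize :: "(nat \<Rightarrow> nat \<Rightarrow> nat) \<Rightarrow> nat" where
  "msize a = (\<Sum>v\<in>supp a. a (fst v) (snd v))"

lemma decomp:
  assumes a: "a \<in> monomials m" and ne: "supp a \<noteq> {}"
  shows "\<exists>k0 i0 a'. a' \<in> monomials m \<and> 1 \<le> k0 \<and> i0 < m \<and> a = add1 a' k0 i0 \<and> msize a' < msize a"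
proof -
  obtain k0 i0 where v: "(k0, i0) \<in> supp a" using ne by auto
  have nz: "a k0 i0 \<noteq> 0" using v unfolding supp_def by simp
  have ki: "1 \<le> k0" "i0 < m" using a nz unfolding monomials_def by auto
  define a' where "a' = (\<lambda>k i. if k = k0 \<and> i = i0 then a k i - 1 else a k i)"
  have sub: "supp a' \<subseteq> supp a" unfolding supp_def a'_def by auto
  have a'm: "a' \<in> monomials m"
  proof -
    have "finite {(k, i). a' k i \<noteq> 0}" using finite_subset[OF sub supp_fin[OF a]] unfolding supp_def by simp
    moreover have "\<forall>k i. a' k i \<noteq> 0 \<longrightarrow> 1 \<le> k \<and> i < m"
    proof (intro allI impI)
      fix k i assume "a' k i \<noteq> 0"
      then have "a k i \<noteq> 0" unfolding a'_def by (auto split: if_splits)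
      then show "1 \<le> k \<and> i < m" using a unfolding monomials_def by blast
    qed
    ultimately show ?thesis unfolding monomials_def by simp
  qed
  have eq: "a = add1 a' k0 i0"
  proof (intro ext)
    fix k i show "a k i = add1 a' k0 i0 k i" using nz unfolding add1_def a'_def by auto
  qed
  have fin: "finite (supp a)" using supp_fin[OF a] .
  have "msize a' = (\<Sum>v\<in>supp a. a' (fst v) (snd v))"
    unfolding msize_def by (rule sum.mono_neutral_left[OF fin sub]) (simp add: supp_mem)
  also have "\<dots> < (\<Sum>v\<in>supp a. a (fst v) (snd v))"
  proof (rule sum_strict_mono_ex1[OF fin])
    show "\<forall>x\<in>supp a. a' (fst x) (snd x) \<le> a (fst x) (snd x)" unfolding a'_def by auto
    show "\<exists>x\<in>supp a. a' (fst x) (snd x) < a (fst x) (snd x)"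
      using v nz unfolding a'_def by (intro bexI[of _ "(k0, i0)"]) auto
  qed
  finally have "msize a' < msize a" unfolding msize_def .
  then show ?thesis using a'm ki eq by blast
qed

lemma aux_field:
  fixes r P X s Q :: complex
  assumes "r \<noteq> 0" "r * P = (X - s) * Q"
  shows "P = (1 / r) * (X * Q) + (- (s / r)) * Q"
proof -
  have "P = ((X - s) * Q) / r" using assms by (simp add: eq_divide_eq mult.commute)
  also have "\<dots> = (1 / r) * (X * Q) + (- (s / r)) * Q"
    by (simp add: divide_simps algebra_simps)
  finally show ?thesis .
qed

lemma supp_empty_eq: "supp a = {} \<Longrightarrow> Pt a p = mono_fun a p"
  unfolding Pt_def mono_fun_alt by simp

definition Pol :: "nat \<Rightarrow> (nat \<Rightarrow> nat) \<Rightarrow> ((nat \<Rightarrow> nat) \<times> (nat \<Rightarrow> nat \<Rightarrow> nat) \<Rightarrow> complex) set" where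
  "Pol m D = cspan_on (Dom m) (R_gens m D)"

definition CPs :: "nat \<Rightarrow> (nat \<Rightarrow> nat) \<Rightarrow> ((nat \<Rightarrow> nat) \<times> (nat \<Rightarrow> nat \<Rightarrow> nat) \<Rightarrow> complex) set" where
  "CPs m D = cspan_on (Dom m) {Pt t | t. t \<in> monomials m \<and> (\<forall>i<m. mono_deg t i \<le> D i)}"

definition shift :: "(nat \<Rightarrow> nat) \<Rightarrow> nat \<Rightarrow> nat \<Rightarrow> nat \<Rightarrow> nat" where
  "shift D k0 i0 = (\<lambda>i. D i + (if i = i0 then k0 else 0))"

lemma deg_add1: "a \<in> monomials m \<Longrightarrow> mono_deg (add1 a k0 i0) = shift (mono_deg a) k0 i0"
  unfolding shift_def using add1_deg by (intro ext) blast

lemma Pol_mono: "(\<forall>i<m. D i \<le> D' i) \<Longrightarrow> Pol m D \<subseteq> Pol m D'"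
  unfolding Pol_def
proof (rule sp_mono)
  assume le: "\<forall>i<m. D i \<le> D' i"
  show "R_gens m D \<subseteq> R_gens m D'"
  proof
    fix f assume "f \<in> R_gens m D"
    then obtain a where a: "f = mono_fun a" "a \<in> monomials m" "\<forall>i<m. mono_deg a i \<le> D i"
      unfolding R_gens_def by blast
    then have "\<forall>i<m. mono_deg a i \<le> D' i" using le using order_trans by blast
    then show "f \<in> R_gens m D'" unfolding R_gens_def using a by blast
  qed
qed

lemma CPs_mono: "(\<forall>i<m. D i \<le> D' i) \<Longrightarrow> CPs m D \<subseteq> CPs m D'"
  unfolding CPs_def
proof (rule sp_mono)
  assume le: "\<forall>i<m. D i \<le> D' i"
  show "{Pt t | t. t \<in> monomials m \<and> (\<forall>i<m. mono_deg t i \<le> D i)} \<subseteq> {Pt t | t. t \<in> monomials m \<and> (\<forall>i<m. mono_deg t i \<le> D' i)}"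
  proof
    fix f assume "f \<in> {Pt t | t. t \<in> monomials m \<and> (\<forall>i<m. mono_deg t i \<le> D i)}"
    then obtain t where a: "f = Pt t" "t \<in> monomials m" "\<forall>i<m. mono_deg t i \<le> D i" by blast
    then have "\<forall>i<m. mono_deg t i \<le> D' i" using le using order_trans by blast
    then show "f \<in> {Pt t | t. t \<in> monomials m \<and> (\<forall>i<m. mono_deg t i \<le> D' i)}" using a by blast
  qed
qed

lemma shift_ge: "\<forall>i<m. D i \<le> shift D k0 i0 i"
  unfolding shift_def by simp

lemma sp_X:
  assumes F: "F \<in> cspan_on D A"
    and gen: "\<And>f. f \<in> A \<Longrightarrow> (\<lambda>p. X p * f p) \<in> cspan_on D B"
  shows "(\<lambda>p. X p * F p) \<in> cspan_on D B"
proof -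
  obtain G c where G: "finite G" "G \<subseteq> A" "\<forall>p\<in>D. F p = (\<Sum>f\<in>G. c f * f p)" using sp_elim[OF F] by blast
  have "\<forall>f\<in>G. (\<lambda>p. X p * f p) \<in> cspan_on D B" using G(2) gen by blast
  then have "(\<lambda>p. \<Sum>f\<in>G. c f * (\<lambda>p. X p * f p) p) \<in> cspan_on D B"
    by (rule sp_sum[OF G(1)])
  moreover have "\<forall>p\<in>D. X p * F p = (\<Sum>f\<in>G. c f * (\<lambda>p. X p * f p) p)"
    using G(3) by (simp add: sum_distrib_left mult.left_commute)
  ultimately show ?thesis by (rule sp_cong)
qed

lemma Pol_X:
  assumes F: "F \<in> Pol m D" and k0: "1 \<le> k0" and i0: "i0 < m"
  shows "(\<lambda>p. of_nat (Xn k0 i0 p) * F p) \<in> Pol m (shift D k0 i0)"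
  using F unfolding Pol_def
proof (rule sp_X)
  fix f assume "f \<in> R_gens m D"
  then obtain a where a: "f = mono_fun a" "a \<in> monomials m" "\<forall>i<m. mono_deg a i \<le> D i"
    unfolding R_gens_def by blast
  have am: "add1 a k0 i0 \<in> monomials m" using add1_mono[OF a(2) k0 i0] .
  have dg: "\<forall>i<m. mono_deg (add1 a k0 i0) i \<le> shift D k0 i0 i"
    using a(3) deg_add1[OF a(2)] unfolding shift_def by simp
  have "(\<lambda>p. of_nat (Xn k0 i0 p) * f p) = mono_fun (add1 a k0 i0)"
    using add1_fun[OF a(2)] a(1) by (intro ext) simp
  then have "(\<lambda>p. of_nat (Xn k0 i0 p) * f p) \<in> R_gens m (shift D k0 i0)"
    unfolding R_gens_def using am dg by blast
  then show "(\<lambda>p. of_nat (Xn k0 i0 p) * f p) \<in> cspan_on (Dom m) (R_gens m (shift D k0 i0))"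
    by (rule sp_gen)
qed

lemma CPs_X:
  assumes F: "F \<in> CPs m D" and k0: "1 \<le> k0" and i0: "i0 < m"
  shows "(\<lambda>p. of_nat (Xn k0 i0 p) * F p) \<in> CPs m (shift D k0 i0)"
  using F unfolding CPs_def
proof (rule sp_X)
  let ?B = "{Pt t | t. t \<in> monomials m \<and> (\<forall>i<m. mono_deg t i \<le> shift D k0 i0 i)}"
  fix f assume "f \<in> {Pt t | t. t \<in> monomials m \<and> (\<forall>i<m. mono_deg t i \<le> D i)}"
  then obtain t where t: "f = Pt t" "t \<in> monomials m" "\<forall>i<m. mono_deg t i \<le> D i" by blast
  have am: "add1 t k0 i0 \<in> monomials m" using add1_mono[OF t(2) k0 i0] .
  have dg: "\<forall>i<m. mono_deg (add1 t k0 i0) i \<le> shift D k0 i0 i"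
    using t(3) deg_add1[OF t(2)] unfolding shift_def by simp
  have g1: "Pt (add1 t k0 i0) \<in> cspan_on (Dom m) ?B" by (rule sp_gen) (use am dg in blast)
  have dg2: "\<forall>i<m. mono_deg t i \<le> shift D k0 i0 i" using t(3) unfolding shift_def by (simp add: trans_le_add1)
  have g2: "Pt t \<in> cspan_on (Dom m) ?B" by (rule sp_gen) (use t(2) dg2 in blast)
  have s: "(\<lambda>p. of_nat (Suc (t k0 i0)) * Pt (add1 t k0 i0) p + of_nat (t k0 i0) * Pt t p) \<in> cspan_on (Dom m) ?B"
    by (rule sp_add[OF sp_scale[OF g1] sp_scale[OF g2]])
  have "\<forall>p\<in>Dom m. of_nat (Xn k0 i0 p) * f p = of_nat (Suc (t k0 i0)) * Pt (add1 t k0 i0) p + of_nat (t k0 i0) * Pt t p"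
    using Pt_step[OF t(2)] t(1) by (simp add: algebra_simps)
  then show "(\<lambda>p. of_nat (Xn k0 i0 p) * f p) \<in> cspan_on (Dom m) ?B"
    by (rule sp_cong[OF s])
qed

lemma Pt_Pol: "t \<in> monomials m \<Longrightarrow> Pt t \<in> Pol m (mono_deg t)"
proof (induct t rule: measure_induct_rule[of msize])
  case (less t)
  show ?case
  proof (cases "supp t = {}")
    case True
    have "mono_fun t \<in> R_gens m (mono_deg t)" unfolding R_gens_def using less(2) by blast
    then have "mono_fun t \<in> Pol m (mono_deg t)" unfolding Pol_def by (rule sp_gen)
    then show ?thesis unfolding Pol_def by (rule sp_cong) (simp add: supp_empty_eq[OF True])
  next
    case False
    obtain k0 i0 t' where d: "t' \<in> monomials m" "1 \<le> k0" "i0 < m" "t = add1 t' k0 i0" "msize t' < msize t"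
      using decomp[OF less(2) False] by blast
    have IH: "Pt t' \<in> Pol m (mono_deg t')" using less(1)[OF d(5) d(1)] .
    have dt: "mono_deg t = shift (mono_deg t') k0 i0" using deg_add1[OF d(1)] d(4) by simp
    have a1: "(\<lambda>p. of_nat (Xn k0 i0 p) * Pt t' p) \<in> Pol m (mono_deg t)"
      using Pol_X[OF IH d(2) d(3)] dt by simp
    have a2: "Pt t' \<in> Pol m (mono_deg t)"
      using subsetD[OF Pol_mono[OF shift_ge[of m "mono_deg t'" k0 i0]] IH] dt by simp
    let ?r = "of_nat (Suc (t' k0 i0)) :: complex"
    have s: "(\<lambda>p. (1 / ?r) * (of_nat (Xn k0 i0 p) * Pt t' p) + (- (of_nat (t' k0 i0) / ?r)) * Pt t' p) \<in> Pol m (mono_deg t)"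
      using sp_add[OF sp_scale[OF a1[unfolded Pol_def]] sp_scale[OF a2[unfolded Pol_def]]] unfolding Pol_def .
    have "\<forall>p\<in>Dom m. Pt t p = (1 / ?r) * (of_nat (Xn k0 i0 p) * Pt t' p) + (- (of_nat (t' k0 i0) / ?r)) * Pt t' p"
    proof
      fix p
      have "?r * Pt t p = (of_nat (Xn k0 i0 p) - of_nat (t' k0 i0)) * Pt t' p" using Pt_step[OF d(1)] d(4) by simp
      moreover have nz: "?r \<noteq> 0" using of_nat_eq_0_iff[of "Suc (t' k0 i0)"] by (simp del: of_nat_Suc)
      ultimately show "Pt t p = (1 / ?r) * (of_nat (Xn k0 i0 p) * Pt t' p) + (- (of_nat (t' k0 i0) / ?r)) * Pt t' p"
        by (intro aux_field)
    qed
    then show ?thesis using sp_cong[OF s[unfolded Pol_def]] unfolding Pol_def by blast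
  qed
qed

lemma mono_CPs: "a \<in> monomials m \<Longrightarrow> mono_fun a \<in> CPs m (mono_deg a)"
proof (induct a rule: measure_induct_rule[of msize])
  case (less a)
  show ?case
  proof (cases "supp a = {}")
    case True
    have "Pt a \<in> CPs m (mono_deg a)" unfolding CPs_def by (rule sp_gen) (use less(2) in blast)
    then show ?thesis unfolding CPs_def by (rule sp_cong) (simp add: supp_empty_eq[OF True])
  next
    case False
    obtain k0 i0 a' where d: "a' \<in> monomials m" "1 \<le> k0" "i0 < m" "a = add1 a' k0 i0" "msize a' < msize a"
      using decomp[OF less(2) False] by blast
    have IH: "mono_fun a' \<in> CPs m (mono_deg a')" using less(1)[OF d(5) d(1)] .
    have dt: "mono_deg a = shift (mono_deg a') k0 i0" using deg_add1[OF d(1)] d(4) by simp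
    have "(\<lambda>p. of_nat (Xn k0 i0 p) * mono_fun a' p) \<in> CPs m (mono_deg a)"
      using CPs_X[OF IH d(2) d(3)] dt by simp
    moreover have "(\<lambda>p. of_nat (Xn k0 i0 p) * mono_fun a' p) = mono_fun a"
      using add1_fun[OF d(1)] d(4) by (intro ext) simp
    ultimately show ?thesis by simp
  qed
qed

lemma uni_zero:
  assumes fE: "finite E" and z: "\<forall>y::nat. (\<Sum>j\<in>E. q j * of_nat y ^ j) = (0::complex)"
  shows "\<forall>j\<in>E. q j = 0"
proof -
  define P where "P = (\<Sum>j\<in>E. monom (q j) j)"
  have ev: "poly P z = (\<Sum>j\<in>E. q j * z ^ j)" for z
    unfolding P_def by (simp add: poly_sum poly_monom)
  have "P = 0"
  proof (rule ccontr)
    assume "P \<noteq> 0"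
    then have fin: "finite {z. poly P z = 0}" by (rule poly_roots_finite)
    have "range (of_nat :: nat \<Rightarrow> complex) \<subseteq> {z. poly P z = 0}" using ev z by auto
    then have "finite (range (of_nat :: nat \<Rightarrow> complex))" using fin finite_subset by blast
    moreover have "inj (of_nat :: nat \<Rightarrow> complex)" by (simp add: inj_on_def)
    ultimately have "finite (UNIV :: nat set)" using finite_imageD by blast
    then show False by simp
  qed
  show ?thesis
  proof
    fix j assume j: "j \<in> E"
    have "coeff P j = (\<Sum>j'\<in>E. coeff (monom (q j') j') j)" unfolding P_def by (simp add: coeff_sum)
    also have "\<dots> = (\<Sum>j'\<in>E. if j' = j then q j' else 0)" by (rule sum.cong) (auto simp: coeff_monom)
    also have "\<dots> = q j" using fE j by (simp add: sum.delta')
    finally show "q j = 0" using \<open>P = 0\<close> by simp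
  qed
qed

lemma multi_zero:
  fixes e :: "'b \<Rightarrow> 'v \<Rightarrow> nat"
  assumes fV: "finite V"
  shows "\<forall>F c. finite F \<longrightarrow> inj_on (\<lambda>a. restrict (e a) V) F \<longrightarrow>
     (\<forall>x::'v \<Rightarrow> nat. (\<Sum>a\<in>F. c a * (\<Prod>v\<in>V. of_nat (x v) ^ e a v)) = (0::complex)) \<longrightarrow> (\<forall>a\<in>F. c a = 0)"
  using fV
proof (induct V rule: finite_induct)
  case empty
  show ?case
  proof (intro allI impI ballI)
    fix F c a
    assume fF: "finite F" and inj: "inj_on (\<lambda>a. restrict (e a) {}) F"
      and z: "\<forall>x::'v \<Rightarrow> nat. (\<Sum>a\<in>F. c a * (\<Prod>v\<in>{}. of_nat (x v) ^ e a v)) = (0::complex)" and a: "a \<in> F"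
    have "F = {a}"
    proof
      show "F \<subseteq> {a}"
      proof
        fix b assume "b \<in> F"
        moreover have "restrict (e b) {} = restrict (e a) {}" by (simp add: restrict_def)
        ultimately have "b = a" using inj a by (auto simp: inj_on_def)
        then show "b \<in> {a}" by simp
      qed
    qed (use a in simp)
    then show "c a = 0" using z by simp
  qed
next
  case (insert w V)
  show ?case
  proof (intro allI impI ballI)
    fix F c a
    assume fF: "finite F" and inj: "inj_on (\<lambda>a. restrict (e a) (insert w V)) F"
      and z: "\<forall>x::'v \<Rightarrow> nat. (\<Sum>a\<in>F. c a * (\<Prod>v\<in>insert w V. of_nat (x v) ^ e a v)) = (0::complex)"
      and a: "a \<in> F"
    define Q where "Q x b = (\<Prod>v\<in>V. (of_nat (x v) :: complex) ^ e b v)" for x b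
    define Fj where "Fj j = {b\<in>F. e b w = j}" for j
    have inner: "(\<Sum>b\<in>Fj j. c b * Q x b) = 0" if j: "j \<in> (\<lambda>b. e b w) ` F" for j x
    proof -
      have all: "(\<Sum>j\<in>(\<lambda>b. e b w) ` F. (\<Sum>b\<in>Fj j. c b * Q x b) * of_nat y ^ j) = 0" for y :: nat
      proof -
        let ?x = "x(w := y)"
        have "(\<Sum>b\<in>F. c b * (\<Prod>v\<in>insert w V. of_nat (?x v) ^ e b v)) = 0" using z by blast
        moreover have "(\<Prod>v\<in>insert w V. (of_nat (?x v) :: complex) ^ e b v) = of_nat y ^ e b w * Q x b" for b
        proof -
          have "(\<Prod>v\<in>insert w V. (of_nat (?x v) :: complex) ^ e b v) = of_nat (?x w) ^ e b w * (\<Prod>v\<in>V. of_nat (?x v) ^ e b v)"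
            using insert(1,2) by simp
          also have "(\<Prod>v\<in>V. (of_nat (?x v) :: complex) ^ e b v) = Q x b"
            unfolding Q_def using insert(2) by (intro prod.cong) auto
          finally show ?thesis by simp
        qed
        ultimately have s0: "(\<Sum>b\<in>F. c b * (of_nat y ^ e b w * Q x b)) = 0" by simp
        have "(\<Sum>b\<in>F. c b * (of_nat y ^ e b w * Q x b)) = (\<Sum>j\<in>(\<lambda>b. e b w) ` F. \<Sum>b\<in>{b\<in>F. e b w = j}. c b * (of_nat y ^ e b w * Q x b))"
          by (rule sum.image_gen[OF fF])
        also have "\<dots> = (\<Sum>j\<in>(\<lambda>b. e b w) ` F. (\<Sum>b\<in>Fj j. c b * Q x b) * of_nat y ^ j)"
        proof (rule sum.cong[OF refl])
          fix j
          have "(\<Sum>b\<in>{b\<in>F. e b w = j}. c b * (of_nat y ^ e b w * Q x b)) = (\<Sum>b\<in>Fj j. c b * Q x b * of_nat y ^ j)"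
            unfolding Fj_def by (rule sum.cong) (auto simp: algebra_simps)
          also have "\<dots> = (\<Sum>b\<in>Fj j. c b * Q x b) * of_nat y ^ j" by (simp add: sum_distrib_right)
          finally show "(\<Sum>b\<in>{b\<in>F. e b w = j}. c b * (of_nat y ^ e b w * Q x b)) = (\<Sum>b\<in>Fj j. c b * Q x b) * of_nat y ^ j" .
        qed
        finally show ?thesis using s0 by simp
      qed
      have "\<forall>j\<in>(\<lambda>b. e b w) ` F. (\<Sum>b\<in>Fj j. c b * Q x b) = 0"
        by (rule uni_zero) (use fF all in \<open>simp_all add: mult.commute\<close>)
      then show ?thesis using j by blast
    qed
    let ?j = "e a w"
    have fFj: "finite (Fj ?j)" unfolding Fj_def using fF by simp
    have injj: "inj_on (\<lambda>b. restrict (e b) V) (Fj ?j)"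
    proof (rule inj_onI)
      fix b1 b2 assume b: "b1 \<in> Fj ?j" "b2 \<in> Fj ?j" "restrict (e b1) V = restrict (e b2) V"
      have "restrict (e b1) (insert w V) = restrict (e b2) (insert w V)"
      proof
        fix v show "restrict (e b1) (insert w V) v = restrict (e b2) (insert w V) v"
        proof (cases "v = w")
          case True
          then show ?thesis using b(1,2) unfolding Fj_def by simp
        next
          case False
          show ?thesis
          proof (cases "v \<in> V")
            case True
            have "restrict (e b1) V v = restrict (e b2) V v" using b(3) by simp
            then show ?thesis using True by simp
          next
            case False2: False
            then show ?thesis using False by simp
          qed
        qed
      qed
      moreover have "b1 \<in> F" "b2 \<in> F" using b unfolding Fj_def by auto
      ultimately show "b1 = b2" using inj by (auto simp: inj_on_def)
    qed
    have zj: "\<forall>x::'v \<Rightarrow> nat. (\<Sum>b\<in>Fj ?j. c b * (\<Prod>v\<in>V. of_nat (x v) ^ e b v)) = (0::complex)"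
      using inner[of ?j] a unfolding Q_def by blast
    have "a \<in> Fj ?j" unfolding Fj_def using a by simp
    then show "c a = 0" using insert(3)[rule_format, OF fFj injj zj[rule_format]] by blast
  qed
qed

lemma obj0: "c \<in> obj m \<Longrightarrow> \<not> i < m \<Longrightarrow> c i = 0"
  unfolding obj_def by simp

lemma nc_bound:
  assumes p: "\<rho> permutes {..<n}" and nz: "num_cycles k n \<rho> \<noteq> 0"
  shows "1 \<le> k \<and> k \<le> n"
proof -
  have "\<not> (k = 0 \<or> card {..<n} < k)"
  proof
    assume "k = 0 \<or> card {..<n} < k"
    then have "cnt k {..<n} \<rho> = 0"
      by (rule cnt_zero[OF perm_of_permutes[OF p] finite_lessThan stab_permutes[OF p]])
    then show False using nz by (simp add: num_cycles_cnt)
  qed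
  then show ?thesis by simp
qed

lemma type_props:
  assumes c: "c \<in> obj m" and r: "\<rho> \<in> Sym c"
  shows "(\<lambda>k i. num_cycles k (c i) (\<rho> i)) \<in> monomials m
    \<and> (\<forall>i<m. mono_deg (\<lambda>k i. num_cycles k (c i) (\<rho> i)) i = c i)
    \<and> (\<forall>p\<in>Dom m. binomX c (conj_class c \<rho>) p = Pt (\<lambda>k i. num_cycles k (c i) (\<rho> i)) p)"
proof -
  let ?ty = "\<lambda>k i. num_cycles k (c i) (\<rho> i)"
  have nz: "1 \<le> k \<and> k \<le> c i \<and> i < m" if "?ty k i \<noteq> 0" for k i
  proof -
    have kb: "1 \<le> k \<and> k \<le> c i" using nc_bound[OF Sym_perm[OF r] that] .
    have "i < m"
    proof (rule ccontr)
      assume "\<not> i < m"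
      then have "c i = 0" by (rule obj0[OF c])
      then show False using kb by simp
    qed
    then show ?thesis using kb by simp
  qed
  define Nc where "Nc = (\<Sum>i<m. c i)"
  have cNc: "c i \<le> Nc" if "i < m" for i
    unfolding Nc_def using that by (intro member_le_sum) auto
  have supp_sub: "supp ?ty \<subseteq> {1..Nc} \<times> {..<m}"
  proof
    fix v assume "v \<in> supp ?ty"
    then obtain k i where v: "v = (k, i)" "?ty k i \<noteq> 0" unfolding supp_def by auto
    then show "v \<in> {1..Nc} \<times> {..<m}" using nz[OF v(2)] cNc[of i] by auto
  qed
  have mon: "?ty \<in> monomials m"
  proof -
    have "finite {(k, i). ?ty k i \<noteq> 0}"
      using finite_subset[OF supp_sub] unfolding supp_def by simp
    moreover have "\<forall>k i. ?ty k i \<noteq> 0 \<longrightarrow> 1 \<le> k \<and> i < m" using nz by blast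
    ultimately show ?thesis unfolding monomials_def by simp
  qed
  have deg: "mono_deg ?ty i = c i" if i: "i < m" for i
  proof -
    have rp: "\<rho> i permutes {..<c i}" using Sym_perm[OF r] .
    have "mono_deg ?ty i = (\<Sum>k\<in>{1..c i}. k * ?ty k i)"
      by (rule deg_ext) (use nz in auto)
    also have "\<dots> = (\<Sum>k\<in>{1..c i}. k * cnt k {..<c i} (\<rho> i))" by (simp add: num_cycles_cnt)
    also have "\<dots> = card {..<c i}"
      by (rule cnt_sum[OF perm_of_permutes[OF rp] finite_lessThan stab_permutes[OF rp]]) simp
    finally show ?thesis by simp
  qed
  have bx: "binomX c (conj_class c \<rho>) p = Pt ?ty p" if p: "p \<in> Dom m" for p
  proof -
    obtain d \<sigma> where ds: "p = (d, \<sigma>)" "d \<in> obj m" "\<sigma> \<in> Sym d" using p unfolding Dom_def by auto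
    define N where "N = (\<Sum>i<m. c i + d i)"
    have NN: "\<forall>i<m. c i \<le> N \<and> d i \<le> N"
    proof (intro allI impI)
      fix i assume "i < m"
      then have "c i + d i \<le> N" unfolding N_def by (intro member_le_sum) auto
      then show "c i \<le> N \<and> d i \<le> N" by simp
    qed
    have "binomX c (conj_class c \<rho>) p =
      of_nat (\<Prod>i<m. \<Prod>k\<in>{1..N}. num_cycles k (d i) (\<sigma> i) choose num_cycles k (c i) (\<rho> i))"
      using binomX_prod[OF c r ds(2) ds(3) NN] ds(1) by simp
    also have "\<dots> = (\<Prod>i<m. \<Prod>k\<in>{1..N}. (of_nat (num_cycles k (d i) (\<sigma> i) choose num_cycles k (c i) (\<rho> i)) :: complex))"
      by (simp add: of_nat_prod)
    also have "\<dots> = (\<Prod>k\<in>{1..N}. \<Prod>i<m. (of_nat (num_cycles k (d i) (\<sigma> i) choose num_cycles k (c i) (\<rho> i)) :: complex))"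
      by (rule prod.swap)
    also have "\<dots> = (\<Prod>v\<in>{1..N} \<times> {..<m}. (of_nat (num_cycles (fst v) (d (snd v)) (\<sigma> (snd v)) choose ?ty (fst v) (snd v)) :: complex))"
      by (simp add: prod.cartesian_product case_prod_beta)
    also have "\<dots> = Pt ?ty p"
    proof -
      have sub: "supp ?ty \<subseteq> {1..N} \<times> {..<m}"
      proof
        fix v assume "v \<in> supp ?ty"
        then obtain k i where v: "v = (k, i)" "?ty k i \<noteq> 0" unfolding supp_def by auto
        then show "v \<in> {1..N} \<times> {..<m}" using nz[OF v(2)] NN by force
      qed
      have e: "Pt ?ty p = (\<Prod>v\<in>{1..N} \<times> {..<m}. of_nat (Xn (fst v) (snd v) p choose ?ty (fst v) (snd v)))"
        by (rule Pt_ext[OF _ sub]) simp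
      show ?thesis unfolding e using ds(1) by (simp add: Xn_def)
    qed
    finally show ?thesis .
  qed
  show ?thesis using mon deg bx by blast
qed

lemma realize:
  assumes t: "t \<in> monomials m"
  shows "\<exists>c \<rho>. c \<in> obj m \<and> \<rho> \<in> Sym c \<and> (\<forall>i<m. c i = mono_deg t i) \<and> (\<forall>k i. num_cycles k (c i) (\<rho> i) = t k i)"
proof -
  define N where "N = (\<Sum>v\<in>supp t. fst v)"
  have tb: "t k i \<noteq> 0 \<longrightarrow> 1 \<le> k \<and> k \<le> N \<and> i < m" for k i
  proof
    assume nz: "t k i \<noteq> 0"
    then have "(k, i) \<in> supp t" unfolding supp_def by simp
    then have "fst (k, i) \<le> N" unfolding N_def using supp_fin[OF t] by (intro member_le_sum) auto
    moreover have "1 \<le> k \<and> i < m" using t nz unfolding monomials_def by blast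
    ultimately show "1 \<le> k \<and> k \<le> N \<and> i < m" by simp
  qed
  have ex: "\<exists>q::nat \<times> (nat \<Rightarrow> nat). snd q permutes {..<fst q} \<and> (\<forall>k. cnt k {..<fst q} (snd q) = t k i)
      \<and> fst q = (\<Sum>k\<in>{1..N}. k * t k i)" for i
  proof -
    have "\<forall>k. t k i \<noteq> 0 \<longrightarrow> 1 \<le> k \<and> k \<le> N" using tb by blast
    then obtain n \<rho> where "\<rho> permutes {..<n}" "\<forall>k. cnt k {..<n} \<rho> = t k i" "n = (\<Sum>k\<in>{1..N}. k * t k i)"
      using realize1[of "sum (\<lambda>k. t k i) {1..N}" N, rule_format, of "\<lambda>k. t k i"] by blast
    then show ?thesis by (intro exI[of _ "(n, \<rho>)"]) simp
  qed
  have ex': "\<forall>i. \<exists>q::nat \<times> (nat \<Rightarrow> nat). snd q permutes {..<fst q} \<and> (\<forall>k. cnt k {..<fst q} (snd q) = t k i)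
      \<and> fst q = (\<Sum>k\<in>{1..N}. k * t k i)" using ex by blast
  obtain Q where Q: "\<forall>i. snd (Q i) permutes {..<fst (Q i)} \<and> (\<forall>k. cnt k {..<fst (Q i)} (snd (Q i)) = t k i)
      \<and> fst (Q i) = (\<Sum>k\<in>{1..N}. k * t k i)"
    using choice[OF ex'] by blast
  define c where "c i = (if i < m then fst (Q i) else 0)" for i
  define \<rho> where "\<rho> i = (if i < m then snd (Q i) else id)" for i
  have cobj: "c \<in> obj m" unfolding obj_def c_def by simp
  have rS: "\<rho> \<in> Sym c" unfolding Sym_def
  proof (intro CollectI allI)
    fix i show "\<rho> i permutes {..<c i}"
    proof (cases "i < m")
      case True
      have "snd (Q i) permutes {..<fst (Q i)}" using Q by blast
      then show ?thesis by (simp add: \<rho>_def c_def True)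
    next
      case False
      then show ?thesis by (simp add: \<rho>_def c_def permutes_id)
    qed
  qed
  have cdeg: "c i = mono_deg t i" if "i < m" for i
  proof -
    have "mono_deg t i = (\<Sum>k\<in>{1..N}. k * t k i)" by (rule deg_ext) (use tb in auto)
    then show ?thesis using Q that unfolding c_def by simp
  qed
  have nc: "num_cycles k (c i) (\<rho> i) = t k i" for k i
  proof (cases "i < m")
    case True
    have "cnt k {..<fst (Q i)} (snd (Q i)) = t k i" using Q by blast
    then show ?thesis unfolding c_def \<rho>_def by (simp add: num_cycles_cnt True)
  next
    case False
    have "t k i = 0" using tb[of k i] False by blast
    then show ?thesis using False unfolding c_def \<rho>_def by (simp add: num_cycles_cnt cnt_empty)
  qed
  show ?thesis using cobj rS cdeg nc by blast
qed

lemma Pt_realized: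
  assumes t: "t \<in> monomials m"
  shows "\<exists>c \<rho>. c \<in> obj m \<and> \<rho> \<in> Sym c \<and> (\<forall>i<m. c i = mono_deg t i) \<and> (\<forall>p\<in>Dom m. Pt t p = binomX c (conj_class c \<rho>) p)"
proof -
  obtain c \<rho> where cr: "c \<in> obj m" "\<rho> \<in> Sym c" "\<forall>i<m. c i = mono_deg t i" "\<forall>k i. num_cycles k (c i) (\<rho> i) = t k i"
    using realize[OF t] by blast
  have "(\<lambda>k i. num_cycles k (c i) (\<rho> i)) = t" using cr(4) by (intro ext) simp
  then have "\<forall>p\<in>Dom m. binomX c (conj_class c \<rho>) p = Pt t p" using type_props[OF cr(1,2)] by simp
  then show ?thesis using cr(1-3) by (intro exI[of _ c] exI[of _ \<rho>]) simp
qed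

lemma conj_classes_elem: "\<mu> \<in> conj_classes c \<Longrightarrow> \<exists>\<rho>\<in>Sym c. \<mu> = conj_class c \<rho>"
  unfolding conj_classes_def by blast

lemma binomX_Pol:
  assumes c: "c \<in> obj m" and mu: "\<mu> \<in> conj_classes c"
  shows "binomX c \<mu> \<in> Pol m c"
proof -
  obtain \<rho> where r: "\<rho> \<in> Sym c" "\<mu> = conj_class c \<rho>" using conj_classes_elem[OF mu] by blast
  note T = type_props[OF c r(1)]
  let ?ty = "\<lambda>k i. num_cycles k (c i) (\<rho> i)"
  have "Pt ?ty \<in> Pol m (mono_deg ?ty)" using Pt_Pol T by blast
  moreover have "\<forall>i<m. mono_deg ?ty i \<le> c i" using T by simp
  ultimately have "Pt ?ty \<in> Pol m c" using Pol_mono by blast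
  then show ?thesis unfolding Pol_def by (rule sp_cong) (use T r(2) in simp)
qed

lemma CPs_sub_gens:
  assumes le: "\<forall>i<m. D i \<le> D' i"
  shows "CPs m D \<subseteq> cspan_on (Dom m) (CP_gens m D')"
  unfolding CPs_def
proof (rule sp_trans, rule subsetI)
  fix f assume "f \<in> {Pt t | t. t \<in> monomials m \<and> (\<forall>i<m. mono_deg t i \<le> D i)}"
  then obtain t where t: "f = Pt t" "t \<in> monomials m" "\<forall>i<m. mono_deg t i \<le> D i" by blast
  obtain c \<rho> where cr: "c \<in> obj m" "\<rho> \<in> Sym c" "\<forall>i<m. c i = mono_deg t i" "\<forall>p\<in>Dom m. Pt t p = binomX c (conj_class c \<rho>) p"
    using Pt_realized[OF t(2)] by blast
  have "\<forall>i. c i \<le> D' i"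
  proof
    fix i show "c i \<le> D' i"
    proof (cases "i < m")
      case True then show ?thesis using cr(3) t(3) le by (metis order_trans)
    next
      case False then show ?thesis using obj0[OF cr(1)] by simp
    qed
  qed
  moreover have "conj_class c \<rho> \<in> conj_classes c" unfolding conj_classes_def using cr(2) by blast
  ultimately have "binomX c (conj_class c \<rho>) \<in> CP_gens m D'" unfolding CP_gens_def using cr(1) by blast
  then have "binomX c (conj_class c \<rho>) \<in> cspan_on (Dom m) (CP_gens m D')" by (rule sp_gen)
  then show "f \<in> cspan_on (Dom m) (CP_gens m D')" by (rule sp_cong) (use cr(4) t(1) in simp)
qed

lemma CPs_sub_all: "CPs m D \<subseteq> cspan_on (Dom m) (CP_all_gens m)"
  unfolding CPs_def
proof (rule sp_trans, rule subsetI)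
  fix f assume "f \<in> {Pt t | t. t \<in> monomials m \<and> (\<forall>i<m. mono_deg t i \<le> D i)}"
  then obtain t where t: "f = Pt t" "t \<in> monomials m" by blast
  obtain c \<rho> where cr: "c \<in> obj m" "\<rho> \<in> Sym c" "\<forall>p\<in>Dom m. Pt t p = binomX c (conj_class c \<rho>) p"
    using Pt_realized[OF t(2)] by blast
  have "conj_class c \<rho> \<in> conj_classes c" unfolding conj_classes_def using cr(2) by blast
  then have "binomX c (conj_class c \<rho>) \<in> CP_all_gens m" unfolding CP_all_gens_def using cr(1) by blast
  then have "binomX c (conj_class c \<rho>) \<in> cspan_on (Dom m) (CP_all_gens m)" by (rule sp_gen)
  then show "f \<in> cspan_on (Dom m) (CP_all_gens m)" by (rule sp_cong) (use cr(3) t(1) in simp)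
qed

lemma part1:
  assumes fF: "finite F" and sub: "F \<subseteq> monomials m"
    and z: "\<forall>p\<in>Dom m. (\<Sum>a\<in>F. c a * mono_fun a p) = 0"
  shows "\<forall>a\<in>F. c a = 0"
proof -
  define V where "V = (\<Union>a\<in>F. supp a)"
  have fV: "finite V" unfolding V_def using fF sub supp_fin by blast
  have suppV: "supp a \<subseteq> V" if "a \<in> F" for a unfolding V_def using that by blast
  have Vm: "1 \<le> fst v \<and> snd v < m" if vV: "v \<in> V" for v
  proof -
    obtain a where a: "a \<in> F" "v \<in> supp a" using vV unfolding V_def by blast
    then have "a (fst v) (snd v) \<noteq> 0" by (simp add: supp_mem)
    then show ?thesis using a(1) sub unfolding monomials_def by blast
  qed
  define e where "e a v = a (fst v) (snd v)" for a :: "nat \<Rightarrow> nat \<Rightarrow> nat" and v :: "nat \<times> nat"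
  have inj: "inj_on (\<lambda>a. restrict (e a) V) F"
  proof (rule inj_onI)
    fix a b assume ab: "a \<in> F" "b \<in> F" "restrict (e a) V = restrict (e b) V"
    show "a = b"
    proof (intro ext)
      fix k i
      show "a k i = b k i"
      proof (cases "(k, i) \<in> V")
        case True
        have "restrict (e a) V (k, i) = restrict (e b) V (k, i)" using ab(3) by simp
        then show ?thesis using True unfolding e_def by simp
      next
        case False
        then have "(k, i) \<notin> supp a" "(k, i) \<notin> supp b" using suppV ab(1,2) by blast+
        then show ?thesis by (simp add: supp_mem)
      qed
    qed
  qed
  have zz: "\<forall>x::nat \<times> nat \<Rightarrow> nat. (\<Sum>a\<in>F. c a * (\<Prod>v\<in>V. of_nat (x v) ^ e a v)) = (0::complex)"
  proof
    fix x :: "nat \<times> nat \<Rightarrow> nat"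
    define t where "t k i = (if (k, i) \<in> V then x (k, i) else 0)" for k i
    have tm: "t \<in> monomials m"
    proof -
      have "{(k, i). t k i \<noteq> 0} \<subseteq> V" unfolding t_def by auto
      then have "finite {(k, i). t k i \<noteq> 0}" using fV finite_subset by blast
      moreover have "\<forall>k i. t k i \<noteq> 0 \<longrightarrow> 1 \<le> k \<and> i < m"
        using Vm unfolding t_def by (metis fst_conv snd_conv)
      ultimately show ?thesis unfolding monomials_def by simp
    qed
    obtain cc \<rho> where cr: "cc \<in> obj m" "\<rho> \<in> Sym cc" "\<forall>k i. num_cycles k (cc i) (\<rho> i) = t k i"
      using realize[OF tm] by blast
    let ?p = "(cc, \<rho>)"
    have pD: "?p \<in> Dom m" unfolding Dom_def using cr by simp
    have "mono_fun a ?p = (\<Prod>v\<in>V. of_nat (x v) ^ e a v)" if a: "a \<in> F" for a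
    proof -
      have "mono_fun a ?p = (\<Prod>v\<in>V. of_nat (Xn (fst v) (snd v) ?p) ^ a (fst v) (snd v))"
        by (rule mono_ext[OF fV suppV[OF a]])
      also have "\<dots> = (\<Prod>v\<in>V. of_nat (x v) ^ e a v)"
      proof (rule prod.cong[OF refl])
        fix v assume v: "v \<in> V"
        have "Xn (fst v) (snd v) ?p = t (fst v) (snd v)" using cr(3) by (simp add: Xn_def)
        also have "\<dots> = x v" using v unfolding t_def by simp
        finally show "of_nat (Xn (fst v) (snd v) ?p) ^ a (fst v) (snd v) = (of_nat (x v) :: complex) ^ e a v"
          unfolding e_def by simp
      qed
      finally show ?thesis .
    qed
    then have "(\<Sum>a\<in>F. c a * (\<Prod>v\<in>V. of_nat (x v) ^ e a v)) = (\<Sum>a\<in>F. c a * mono_fun a ?p)"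
      by simp
    also have "\<dots> = 0" using z pD by blast
    finally show "(\<Sum>a\<in>F. c a * (\<Prod>v\<in>V. of_nat (x v) ^ e a v)) = (0::complex)" .
  qed
  show ?thesis using multi_zero[OF fV, of e, rule_format, OF fF inj zz[rule_format]] by blast
qed

theorem mainTheorem19:
  fixes m :: nat
  assumes "m \<ge> 1"
  shows "(\<forall>F c. finite F \<and> F \<subseteq> monomials m \<and>
            (\<forall>p\<in>Dom m. (\<Sum>a\<in>F. c a * mono_fun a p) = 0) \<longrightarrow> (\<forall>a\<in>F. c a = 0))
       \<and> cspan_on (Dom m) (CP_all_gens m) = cspan_on (Dom m) (R_all_gens m)
       \<and> (\<forall>d\<in>obj m. cspan_on (Dom m) (CP_gens m d) = cspan_on (Dom m) (R_gens m d))"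
proof (intro conjI)
  show "\<forall>F c. finite F \<and> F \<subseteq> monomials m \<and>
            (\<forall>p\<in>Dom m. (\<Sum>a\<in>F. c a * mono_fun a p) = 0) \<longrightarrow> (\<forall>a\<in>F. c a = 0)"
    using part1 by blast
  have RR: "Pol m D \<subseteq> cspan_on (Dom m) (R_all_gens m)" for D
    unfolding Pol_def by (rule sp_mono) (auto simp: R_gens_def R_all_gens_def)
  show "cspan_on (Dom m) (CP_all_gens m) = cspan_on (Dom m) (R_all_gens m)"
  proof
    show "cspan_on (Dom m) (CP_all_gens m) \<subseteq> cspan_on (Dom m) (R_all_gens m)"
    proof (rule sp_trans, rule subsetI)
      fix f assume "f \<in> CP_all_gens m"
      then obtain c \<mu> where f: "f = binomX c \<mu>" "c \<in> obj m" "\<mu> \<in> conj_classes c"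
        unfolding CP_all_gens_def by blast
      show "f \<in> cspan_on (Dom m) (R_all_gens m)" using binomX_Pol[OF f(2,3)] RR f(1) by blast
    qed
    show "cspan_on (Dom m) (R_all_gens m) \<subseteq> cspan_on (Dom m) (CP_all_gens m)"
    proof (rule sp_trans, rule subsetI)
      fix f assume "f \<in> R_all_gens m"
      then obtain a where f: "f = mono_fun a" "a \<in> monomials m" unfolding R_all_gens_def by blast
      show "f \<in> cspan_on (Dom m) (CP_all_gens m)" using mono_CPs[OF f(2)] CPs_sub_all f(1) by blast
    qed
  qed
  show "\<forall>d\<in>obj m. cspan_on (Dom m) (CP_gens m d) = cspan_on (Dom m) (R_gens m d)"
  proof
    fix d assume d: "d \<in> obj m"
    show "cspan_on (Dom m) (CP_gens m d) = cspan_on (Dom m) (R_gens m d)"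
    proof
      show "cspan_on (Dom m) (CP_gens m d) \<subseteq> cspan_on (Dom m) (R_gens m d)"
      proof (rule sp_trans, rule subsetI)
        fix f assume "f \<in> CP_gens m d"
        then obtain c \<mu> where f: "f = binomX c \<mu>" "c \<in> obj m" "\<forall>i. c i \<le> d i" "\<mu> \<in> conj_classes c"
          unfolding CP_gens_def by blast
        have "Pol m c \<subseteq> Pol m d" using Pol_mono f(3) by blast
        then show "f \<in> cspan_on (Dom m) (R_gens m d)" using binomX_Pol[OF f(2,4)] f(1) unfolding Pol_def by blast
      qed
      show "cspan_on (Dom m) (R_gens m d) \<subseteq> cspan_on (Dom m) (CP_gens m d)"
      proof (rule sp_trans, rule subsetI)
        fix f assume "f \<in> R_gens m d"
        then obtain a where f: "f = mono_fun a" "a \<in> monomials m" "\<forall>i<m. mono_deg a i \<le> d i"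
          unfolding R_gens_def by blast
        show "f \<in> cspan_on (Dom m) (CP_gens m d)" using mono_CPs[OF f(2)] CPs_sub_gens[OF f(3)] f(1) by blast
      qed
    qed
  qed
qed

end
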